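(* Assume Case 2 holds, $d=0$ and $\delta<T_{s-1}$. Then: (1) if $l_1\le1$, then $c(Q^n)=\gamma_n$ for all $n\ge1$; (2) if $l_1>1$, then $l_1^{-1}\gamma\le c(q)<\gamma$, and $l_1^{-1}\gamma_n<c(Q^n)\le\gamma_n$ for all $n\ge2$. Here $\gamma_n=\gamma\delta^{n-1}$.
   Context: Let $f(z,w)=(p(z),q(z,w))$ be a holomorphic skew product germ at the origin of $\mathbb{C}^2$ with $f(0,0)=(0,0)$, where $p(z)=a_\delta z^\delta+O(z^{\delta+1})$ with $a_\delta\neq0$ and integer $\delta\ge1$, and $q(z,w)=\sum_{i+j\ge1}b_{ij}z^iw^j$ is not identically zero. For $n\ge1$ write $f^n=(p^n,Q^n)$. For a nonzero germ $g=\sum g_{ij}z^iw^j$ let $c(g)=\min\{i+j:g_{ij}\neq0\}$. The Newton polygon $N(g)$ is the convex hull of $\bigcup_{g_{ij}\neq0}\{(x,y):x\ge i,\ y\ge j\}$. Let $(n_1,m_1),\dots,(n_s,m_s)$ be the vertices of $N(q)$ with $n_1<\cdots<n_s$, $m_1>\cdots>m_s$; for $1\le k\le s-1$ let $T_k$ be the $y$-intercept of the line through $(n_k,m_k)$ and $(n_{k+1},m_{k+1})$. Case 2 means: $s>1$ and $\delta\le T_{s-1}$; set $(\gamma,d)=(n_s,m_s)$ and $l_1=\frac{n_s-n_{s-1}}{m_{s-1}-m_s}$. *)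

theory Defs
  imports "HOL-Analysis.Analysis"
begin

definition ps1_expansion :: "(complex \<Rightarrow> complex) \<Rightarrow> (nat \<Rightarrow> complex) \<Rightarrow> bool" where
  "ps1_expansion g a \<longleftrightarrow>
     (\<exists>r>0. \<forall>z. norm z < r \<longrightarrow> ((\<lambda>k. a k * z ^ k) has_sum g z) UNIV)"

definition ps2_expansion :: "(complex \<Rightarrow> complex \<Rightarrow> complex) \<Rightarrow> (nat \<Rightarrow> nat \<Rightarrow> complex) \<Rightarrow> bool" where
  "ps2_expansion g a \<longleftrightarrow>
     (\<exists>r>0. \<forall>z w. norm z < r \<longrightarrow> norm w < r \<longrightarrow>
        ((\<lambda>(i,j). a i j * z ^ i * w ^ j) has_sum g z w) UNIV)"

definition coeff2 :: "(complex \<Rightarrow> complex \<Rightarrow> complex) \<Rightarrow> nat \<Rightarrow> nat \<Rightarrow> complex" where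
  "coeff2 g = (THE a. ps2_expansion g a)"

definition germ_ord :: "(complex \<Rightarrow> complex \<Rightarrow> complex) \<Rightarrow> nat" where
  "germ_ord g = (LEAST k. \<exists>i j. i + j = k \<and> coeff2 g i j \<noteq> 0)"

definition newton_polygon :: "(nat \<Rightarrow> nat \<Rightarrow> complex) \<Rightarrow> (real \<times> real) set" where
  "newton_polygon b = convex hull
     (\<Union>{ {(x, y). x \<ge> real i \<and> y \<ge> real j} | i j. b i j \<noteq> 0 })"

text \<open>y-intercept of the line through (n_k,m_k) and (n_{k+1},m_{k+1}).\<close>
definition T_int :: "(nat \<Rightarrow> nat) \<Rightarrow> (nat \<Rightarrow> nat) \<Rightarrow> nat \<Rightarrow> real" where
  "T_int nv mv k = real (mv k) + (real (mv k) - real (mv (Suc k))) * real (nv k)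
                     / (real (nv (Suc k)) - real (nv k))"

definition skewQ :: "(complex \<Rightarrow> complex) \<Rightarrow> (complex \<Rightarrow> complex \<Rightarrow> complex) \<Rightarrow> nat
                      \<Rightarrow> complex \<Rightarrow> complex \<Rightarrow> complex" where
  "skewQ p q n z w = snd (((\<lambda>(x, y). (p x, q x y)) ^^ n) (z, w))"

end

theory Submission
  imports Defs "HOL-Complex_Analysis.Cauchy_Integral_Formula"
begin

definition Fib :: "nat \<Rightarrow> nat \<Rightarrow> ((nat \<times> nat) \<times> (nat \<times> nat)) set" where
  "Fib m n = {x. fst (fst x) + fst (snd x) = m \<and> snd (fst x) + snd (snd x) = n}"

lemma finite_Fib: "finite (Fib m n)"
proof -
  have "Fib m n \<subseteq> ({..m} \<times> {..n}) \<times> ({..m} \<times> {..n})" by (auto simp: Fib_def)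
  then show ?thesis by (rule finite_subset) auto
qed

lemma prod_has_sum:
  fixes f g :: "nat \<times> nat \<Rightarrow> 'a::{real_normed_field,banach,second_countable_topology}"
  assumes f: "(\<lambda>x. norm (f x)) summable_on UNIV" and g: "(\<lambda>x. norm (g x)) summable_on UNIV"
  shows "((\<lambda>x. f (fst x) * g (snd x)) has_sum (infsum f UNIV * infsum g UNIV)) (UNIV \<times> UNIV)"
    and "(\<lambda>x. norm (f (fst x) * g (snd x))) summable_on (UNIV \<times> UNIV)"
proof -
  let ?H = "\<lambda>x::(nat\<times>nat)\<times>(nat\<times>nat). f (fst x) * g (snd x)"
  have gs: "g summable_on UNIV" using g abs_summable_summable by blast
  have fs: "f summable_on UNIV" using f abs_summable_summable by blast
  show Hs: "(\<lambda>x. norm (?H x)) summable_on (UNIV \<times> UNIV)"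
  proof (rule Infinite_Sum.abs_summable_on_Sigma_iff[where f="?H" and A=UNIV and B="\<lambda>_. UNIV", THEN iffD2], intro conjI ballI)
    fix x show "(\<lambda>y. norm (?H (x, y))) summable_on UNIV"
      using summable_on_cmult_right[OF g, of "norm (f x)"] by (simp add: norm_mult)
  next
    have "(\<lambda>x. norm (f x) * infsum (\<lambda>y. norm (g y)) UNIV) summable_on UNIV"
      using summable_on_cmult_left[OF f] by simp
    moreover have "infsum (\<lambda>y. norm (?H (x, y))) UNIV = norm (f x) * infsum (\<lambda>y. norm (g y)) UNIV" for x
      by (simp add: norm_mult infsum_cmult_right')
    ultimately show "(\<lambda>x. norm (infsum (\<lambda>y. norm (?H (x, y))) UNIV)) summable_on UNIV"
      by (simp add: infsum_nonneg)
  qed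
  show "(?H has_sum (infsum f UNIV * infsum g UNIV)) (UNIV \<times> UNIV)"
  proof (rule has_sum_SigmaI)
    fix x show "((\<lambda>y. ?H (x, y)) has_sum (f x * infsum g UNIV)) UNIV"
      using has_sum_cmult_right[OF has_sum_infsum[OF gs], of "f x"] by simp
  next
    show "((\<lambda>x. f x * infsum g UNIV) has_sum (infsum f UNIV * infsum g UNIV)) UNIV"
      using has_sum_cmult_left[OF has_sum_infsum[OF fs]] by simp
  next
    show "?H summable_on UNIV \<times> UNIV" by (rule Infinite_Sum.abs_summable_summable[OF Hs])
  qed
qed

lemma regroup_has_sum:
  fixes H :: "(nat \<times> nat) \<times> (nat \<times> nat) \<Rightarrow> 'a::banach"
  assumes "(H has_sum S) (UNIV \<times> UNIV)"
  shows "((\<lambda>y. \<Sum>x\<in>Fib (fst y) (snd y). H x) has_sum S) UNIV"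
proof -
  let ?phi = "\<lambda>x::(nat \<times> nat) \<times> (nat \<times> nat). ((fst (fst x) + fst (snd x), snd (fst x) + snd (snd x)), x)"
  have bij: "bij_betw ?phi UNIV (Sigma UNIV (\<lambda>y. Fib (fst y) (snd y)))"
    by (rule bij_betwI[of _ _ _ snd]) (auto simp: Fib_def)
  have "((\<lambda>x. (\<lambda>(y, x). H x) (?phi x)) has_sum S) UNIV" using assms by simp
  then have "((\<lambda>(y, x). H x) has_sum S) (Sigma UNIV (\<lambda>y. Fib (fst y) (snd y)))"
    using has_sum_reindex_bij_betw[OF bij] by blast
  moreover have "((\<lambda>x. (\<lambda>(y, x). H x) (y, x)) has_sum (\<Sum>x\<in>Fib (fst y) (snd y). H x)) (Fib (fst y) (snd y))" for y
    using has_sum_finite[OF finite_Fib] by simp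
  ultimately show ?thesis
    by (rule has_sum_SigmaD[where g="\<lambda>y. \<Sum>x\<in>Fib (fst y) (snd y). H x"])
qed

definition ps_good :: "(nat \<Rightarrow> nat \<Rightarrow> complex) \<Rightarrow> real \<Rightarrow> bool" where
  "ps_good c r \<longleftrightarrow> (\<lambda>x. norm (c (fst x) (snd x)) * r ^ (fst x + snd x)) summable_on UNIV"

definition ps_N :: "(nat \<Rightarrow> nat \<Rightarrow> complex) \<Rightarrow> real \<Rightarrow> real" where
  "ps_N c r = (\<Sum>\<^sub>\<infinity>x\<in>UNIV. norm (c (fst x) (snd x)) * r ^ (fst x + snd x))"

definition ps_W :: "(nat \<Rightarrow> nat \<Rightarrow> complex) \<Rightarrow> complex \<Rightarrow> complex \<Rightarrow> nat \<times> nat \<Rightarrow> complex" where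
  "ps_W c z w x = c (fst x) (snd x) * z ^ fst x * w ^ snd x"

definition ps_ev :: "(nat \<Rightarrow> nat \<Rightarrow> complex) \<Rightarrow> complex \<Rightarrow> complex \<Rightarrow> complex" where
  "ps_ev c z w = (\<Sum>\<^sub>\<infinity>x\<in>UNIV. ps_W c z w x)"

lemma ps_W_norm_le:
  assumes "norm z \<le> r" "norm w \<le> r"
  shows "norm (ps_W c z w x) \<le> norm (c (fst x) (snd x)) * r ^ (fst x + snd x)"
proof -
  have r0: "0 \<le> r" using assms(1) norm_ge_zero order_trans by blast
  have "norm z ^ fst x * norm w ^ snd x \<le> r ^ fst x * r ^ snd x"
    using assms r0 by (intro mult_mono power_mono) auto
  then show ?thesis
    by (simp add: ps_W_def norm_mult norm_power power_add mult.assoc mult_left_mono)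
qed

lemma ps_W_abs:
  assumes "ps_good c r" "norm z \<le> r" "norm w \<le> r"
  shows "(\<lambda>x. norm (ps_W c z w x)) summable_on UNIV"
  using assms(1) unfolding ps_good_def
  by (rule summable_on_comparison_test) (use ps_W_norm_le[OF assms(2,3)] in auto)

lemma ps_ev_has_sum:
  assumes "ps_good c r" "norm z \<le> r" "norm w \<le> r"
  shows "(ps_W c z w has_sum ps_ev c z w) UNIV"
  unfolding ps_ev_def
  by (rule has_sum_infsum, rule Infinite_Sum.abs_summable_summable[OF ps_W_abs[OF assms]])

lemma ps_ev_le:
  assumes "ps_good c r" "norm z \<le> r" "norm w \<le> r"
  shows "norm (ps_ev c z w) \<le> ps_N c r"
  unfolding ps_N_def
  by (rule norm_infsum_le[OF ps_ev_has_sum[OF assms] has_sum_infsum])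
     (use assms(1) ps_W_norm_le[OF assms(2,3)] in \<open>auto simp: ps_good_def\<close>)

lemma ps_N_nonneg: "0 \<le> r \<Longrightarrow> 0 \<le> ps_N c r"
  unfolding ps_N_def by (rule infsum_nonneg) auto

definition ps_mul :: "(nat \<Rightarrow> nat \<Rightarrow> complex) \<Rightarrow> (nat \<Rightarrow> nat \<Rightarrow> complex) \<Rightarrow> nat \<Rightarrow> nat \<Rightarrow> complex" where
  "ps_mul c d m n = (\<Sum>x\<in>Fib m n. c (fst (fst x)) (snd (fst x)) * d (fst (snd x)) (snd (snd x)))"

lemma ps_mul_good:
  assumes c: "ps_good c r" and d: "ps_good d r" and r: "0 \<le> r"
  shows "ps_good (ps_mul c d) r \<and> ps_N (ps_mul c d) r \<le> ps_N c r * ps_N d r"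
proof -
  define f where "f = (\<lambda>x::nat\<times>nat. norm (c (fst x) (snd x)) * r ^ (fst x + snd x))"
  define g where "g = (\<lambda>x::nat\<times>nat. norm (d (fst x) (snd x)) * r ^ (fst x + snd x))"
  have fs: "(\<lambda>x. norm (f x)) summable_on UNIV" using c r by (simp add: ps_good_def f_def)
  have gs: "(\<lambda>x. norm (g x)) summable_on UNIV" using d r by (simp add: ps_good_def g_def)
  have hs: "((\<lambda>y. \<Sum>x\<in>Fib (fst y) (snd y). f (fst x) * g (snd x)) has_sum (ps_N c r * ps_N d r)) UNIV"
    using regroup_has_sum[OF prod_has_sum(1)[OF fs gs]] by (simp add: ps_N_def f_def g_def)
  have le: "norm (ps_mul c d (fst y) (snd y)) * r ^ (fst y + snd y)
            \<le> (\<Sum>x\<in>Fib (fst y) (snd y). f (fst x) * g (snd x))" for y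
  proof -
    have "norm (ps_mul c d (fst y) (snd y)) * r ^ (fst y + snd y)
       \<le> (\<Sum>x\<in>Fib (fst y) (snd y). norm (c (fst (fst x)) (snd (fst x)) * d (fst (snd x)) (snd (snd x)))) * r ^ (fst y + snd y)"
      unfolding ps_mul_def using r by (intro mult_right_mono norm_sum) auto
    also have "\<dots> = (\<Sum>x\<in>Fib (fst y) (snd y). f (fst x) * g (snd x))"
      unfolding sum_distrib_right
    proof (rule sum.cong)
      fix x assume "x \<in> Fib (fst y) (snd y)"
      then have "fst y + snd y = (fst (fst x) + snd (fst x)) + (fst (snd x) + snd (snd x))"
        by (auto simp: Fib_def)
      then show "norm (c (fst (fst x)) (snd (fst x)) * d (fst (snd x)) (snd (snd x))) * r ^ (fst y + snd y) = f (fst x) * g (snd x)"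
        by (simp add: f_def g_def norm_mult power_add)
    qed simp
    finally show ?thesis .
  qed
  have good: "ps_good (ps_mul c d) r"
    unfolding ps_good_def
    by (rule summable_on_comparison_test[OF has_sum_imp_summable[OF hs]]) (use le r in auto)
  moreover have "ps_N (ps_mul c d) r \<le> ps_N c r * ps_N d r"
  proof -
    have "((\<lambda>y. norm (ps_mul c d (fst y) (snd y)) * r ^ (fst y + snd y)) has_sum ps_N (ps_mul c d) r) UNIV"
      using good unfolding ps_good_def ps_N_def by (rule has_sum_infsum)
    then show ?thesis by (rule has_sum_mono[OF _ hs]) (use le in auto)
  qed
  ultimately show ?thesis by blast
qed

lemma ps_mul_ev:
  assumes c: "ps_good c r" and d: "ps_good d r" and z: "norm z \<le> r" and w: "norm w \<le> r"
  shows "ps_ev (ps_mul c d) z w = ps_ev c z w * ps_ev d z w"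
proof -
  have hs: "((\<lambda>y. \<Sum>x\<in>Fib (fst y) (snd y). ps_W c z w (fst x) * ps_W d z w (snd x)) has_sum (ps_ev c z w * ps_ev d z w)) UNIV"
    using regroup_has_sum[OF prod_has_sum(1)[OF ps_W_abs[OF c z w] ps_W_abs[OF d z w]]]
    by (simp add: ps_ev_def)
  have eq: "(\<Sum>x\<in>Fib (fst y) (snd y). ps_W c z w (fst x) * ps_W d z w (snd x)) = ps_W (ps_mul c d) z w y" for y
    unfolding ps_W_def ps_mul_def sum_distrib_right
  proof (rule sum.cong)
    fix x assume "x \<in> Fib (fst y) (snd y)"
    then have "fst y = fst (fst x) + fst (snd x)" "snd y = snd (fst x) + snd (snd x)"
      by (auto simp: Fib_def)
    then show "c (fst (fst x)) (snd (fst x)) * z ^ fst (fst x) * w ^ snd (fst x) *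
          (d (fst (snd x)) (snd (snd x)) * z ^ fst (snd x) * w ^ snd (snd x)) =
          c (fst (fst x)) (snd (fst x)) * d (fst (snd x)) (snd (snd x)) * z ^ fst y * w ^ snd y"
      by (simp add: power_add)
  qed simp
  show ?thesis using hs unfolding eq ps_ev_def by (rule infsumI)
qed

definition ps_one :: "nat \<Rightarrow> nat \<Rightarrow> complex" where
  "ps_one i j = (if i = 0 \<and> j = 0 then 1 else 0)"

lemma ps_one_good: "ps_good ps_one r \<and> ps_N ps_one r = 1"
proof -
  have "((\<lambda>x. norm (ps_one (fst x) (snd x)) * r ^ (fst x + snd x)) has_sum 1) UNIV"
    by (rule has_sum_finite_neutralI[where B="{(0,0)}"]) (auto simp: ps_one_def)
  then show ?thesis unfolding ps_good_def ps_N_def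
    using has_sum_imp_summable infsumI by blast
qed

lemma ps_one_ev: "ps_ev ps_one z w = 1"
proof -
  have "(ps_W ps_one z w has_sum 1) UNIV"
    by (rule has_sum_finite_neutralI[where B="{(0,0)}"]) (auto simp: ps_one_def ps_W_def)
  then show ?thesis unfolding ps_ev_def by (rule infsumI)
qed

primrec ps_pw :: "(nat \<Rightarrow> nat \<Rightarrow> complex) \<Rightarrow> nat \<Rightarrow> nat \<Rightarrow> nat \<Rightarrow> complex" where
  "ps_pw u 0 = ps_one"
| "ps_pw u (Suc k) = ps_mul u (ps_pw u k)"

lemma ps_pw_good:
  assumes u: "ps_good u r" and r: "0 \<le> r"
  shows "ps_good (ps_pw u k) r \<and> ps_N (ps_pw u k) r \<le> ps_N u r ^ k"
proof (induction k)
  case 0 then show ?case using ps_one_good by simp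
next
  case (Suc k)
  have m: "ps_good (ps_pw u (Suc k)) r \<and> ps_N (ps_pw u (Suc k)) r \<le> ps_N u r * ps_N (ps_pw u k) r"
    using ps_mul_good[OF u _ r, of "ps_pw u k"] Suc by simp
  moreover have "ps_N u r * ps_N (ps_pw u k) r \<le> ps_N u r * ps_N u r ^ k"
    using Suc ps_N_nonneg[OF r] by (intro mult_left_mono) auto
  ultimately show ?case by simp
qed

lemma ps_pw_ev:
  assumes u: "ps_good u r" and z: "norm z \<le> r" and w: "norm w \<le> r"
  shows "ps_ev (ps_pw u k) z w = ps_ev u z w ^ k"
proof -
  have r: "0 \<le> r" using z norm_ge_zero order_trans by blast
  show ?thesis
  proof (induction k)
    case 0 then show ?case by (simp add: ps_one_ev)
  next
    case (Suc k) then show ?case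
      using ps_mul_ev[OF u conjunct1[OF ps_pw_good[OF u r, of k]] z w] by simp
  qed
qed

definition ps_ordge :: "(nat \<Rightarrow> nat \<Rightarrow> complex) \<Rightarrow> nat \<Rightarrow> bool" where
  "ps_ordge c k \<longleftrightarrow> (\<forall>i j. i + j < k \<longrightarrow> c i j = 0)"

lemma ps_mul_ordge:
  assumes "ps_ordge c a" "ps_ordge d b"
  shows "ps_ordge (ps_mul c d) (a + b)"
  unfolding ps_ordge_def ps_mul_def
proof (intro allI impI sum.neutral ballI)
  fix i j x assume ij: "i + j < a + b" and x: "x \<in> Fib i j"
  then have "fst (fst x) + snd (fst x) < a \<or> fst (snd x) + snd (snd x) < b"
    by (auto simp: Fib_def)
  then show "c (fst (fst x)) (snd (fst x)) * d (fst (snd x)) (snd (snd x)) = 0"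
    using assms by (auto simp: ps_ordge_def)
qed

lemma ps_pw_ordge:
  assumes "ps_ordge u a"
  shows "ps_ordge (ps_pw u k) (k * a)"
proof (induction k)
  case 0 then show ?case by (simp add: ps_ordge_def)
next
  case (Suc k) then show ?case using ps_mul_ordge[OF assms Suc] by (simp add: add.commute)
qed

definition ps_zax :: "(nat \<Rightarrow> nat \<Rightarrow> complex) \<Rightarrow> nat \<Rightarrow> bool" where
  "ps_zax c k \<longleftrightarrow> (\<forall>i<k. c i 0 = 0)"

lemma ps_mul_zax:
  assumes c: "ps_zax c a" and d: "ps_zax d b"
  shows "ps_zax (ps_mul c d) (a + b) \<and> ps_mul c d (a + b) 0 = c a 0 * d b 0"
proof -
  let ?t = "\<lambda>x. c (fst (fst x)) (snd (fst x)) * d (fst (snd x)) (snd (snd x))"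
  have z: "?t x = 0" if "x \<in> Fib m 0" "x \<noteq> ((a,0),(b,0))" "m \<le> a + b" for x m
  proof -
    from that(1) have s: "snd (fst x) = 0" "snd (snd x) = 0" "fst (fst x) + fst (snd x) = m"
      by (auto simp: Fib_def)
    have "fst (fst x) < a \<or> fst (snd x) < b"
    proof (rule ccontr)
      assume "\<not> ?thesis"
      then have "fst (fst x) = a" "fst (snd x) = b" using s that(3) by auto
      then have "x = ((a,0),(b,0))" using s by (metis prod.collapse)
      then show False using that(2) by simp
    qed
    then show ?thesis using c d s by (auto simp: ps_zax_def)
  qed
  have "ps_mul c d m 0 = 0" if "m < a + b" for m
    unfolding ps_mul_def
  proof (rule sum.neutral, rule ballI)
    fix x assume x: "x \<in> Fib m 0"
    have "x \<noteq> ((a,0),(b,0))" using x that by (auto simp: Fib_def)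
    then show "?t x = 0" using z[OF x] that by simp
  qed
  moreover have "ps_mul c d (a + b) 0 = (\<Sum>x\<in>{((a,0),(b,0))}. ?t x)"
    unfolding ps_mul_def
    by (rule sum.mono_neutral_right[OF finite_Fib]) (use z in \<open>auto simp: Fib_def\<close>)
  ultimately show ?thesis by (simp add: ps_zax_def)
qed

lemma ps_pw_zax:
  assumes "ps_zax u a"
  shows "ps_zax (ps_pw u k) (k * a) \<and> ps_pw u k (k * a) 0 = u a 0 ^ k"
proof (induction k)
  case 0 then show ?case by (simp add: ps_zax_def ps_one_def)
next
  case (Suc k)
  then show ?case using ps_mul_zax[OF assms conjunct1[OF Suc]] by (simp add: add.commute)
qed

definition ps_e :: "(nat \<Rightarrow> nat \<Rightarrow> complex) \<Rightarrow> (nat \<Rightarrow> nat \<Rightarrow> complex) \<Rightarrow> nat \<times> nat \<Rightarrow> nat \<Rightarrow> nat \<Rightarrow> complex" where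
  "ps_e u v x = ps_mul (ps_pw u (fst x)) (ps_pw v (snd x))"

definition Tri :: "nat \<Rightarrow> (nat \<times> nat) set" where
  "Tri K = {x. fst x + snd x \<le> K}"

lemma finite_Tri: "finite (Tri K)"
proof -
  have "Tri K \<subseteq> {..K} \<times> {..K}" by (auto simp: Tri_def)
  then show ?thesis by (rule finite_subset) auto
qed

definition ps_comp :: "(nat \<Rightarrow> nat \<Rightarrow> complex) \<Rightarrow> (nat \<Rightarrow> nat \<Rightarrow> complex) \<Rightarrow> (nat \<Rightarrow> nat \<Rightarrow> complex) \<Rightarrow> nat \<Rightarrow> nat \<Rightarrow> complex" where
  "ps_comp b u v m n = (\<Sum>x\<in>Tri (m + n). b (fst x) (snd x) * ps_e u v x m n)"

lemma ps_e_good: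
  assumes u: "ps_good u r" and v: "ps_good v r" and r: "0 \<le> r"
  shows "ps_good (ps_e u v x) r \<and> ps_N (ps_e u v x) r \<le> ps_N u r ^ fst x * ps_N v r ^ snd x"
proof -
  note pu = ps_pw_good[OF u r, of "fst x"] and pv = ps_pw_good[OF v r, of "snd x"]
  have m: "ps_good (ps_e u v x) r \<and> ps_N (ps_e u v x) r \<le> ps_N (ps_pw u (fst x)) r * ps_N (ps_pw v (snd x)) r"
    unfolding ps_e_def using ps_mul_good pu pv r by blast
  moreover have "ps_N (ps_pw u (fst x)) r * ps_N (ps_pw v (snd x)) r \<le> ps_N u r ^ fst x * ps_N v r ^ snd x"
    using pu pv ps_N_nonneg[OF r] by (intro mult_mono) auto
  ultimately show ?thesis by linarith
qed

lemma ps_e_ev: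
  assumes u: "ps_good u r" and v: "ps_good v r" and z: "norm z \<le> r" and w: "norm w \<le> r"
  shows "ps_ev (ps_e u v x) z w = ps_ev u z w ^ fst x * ps_ev v z w ^ snd x"
proof -
  have r: "0 \<le> r" using z norm_ge_zero order_trans by blast
  show ?thesis unfolding ps_e_def
    using ps_mul_ev[OF conjunct1[OF ps_pw_good[OF u r]] conjunct1[OF ps_pw_good[OF v r]] z w]
      ps_pw_ev[OF u z w] ps_pw_ev[OF v z w] by simp
qed

lemma ps_e_ordge:
  assumes "ps_ordge u a" "ps_ordge v c"
  shows "ps_ordge (ps_e u v x) (fst x * a + snd x * c)"
  unfolding ps_e_def by (rule ps_mul_ordge[OF ps_pw_ordge[OF assms(1)] ps_pw_ordge[OF assms(2)]])

lemma ps_comp_main: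
  assumes b: "ps_good b R" and u: "ps_good u r" and v: "ps_good v r" and r: "0 \<le> r"
    and u0: "ps_ordge u 1" and v0: "ps_ordge v 1" and Nu: "ps_N u r \<le> R" and Nv: "ps_N v r \<le> R"
  shows "ps_good (ps_comp b u v) r"
    and "\<And>z w. norm z \<le> r \<Longrightarrow> norm w \<le> r \<Longrightarrow> ps_ev (ps_comp b u v) z w = ps_ev b (ps_ev u z w) (ps_ev v z w)"
proof -
  have R: "0 \<le> R" using Nu ps_N_nonneg[OF r, of u] by linarith
  have eo: "ps_e u v x m n = 0" if "m + n < fst x + snd x" for x m n
    using ps_e_ordge[OF u0 v0, of x] that by (auto simp: ps_ordge_def)
  define Gn where "Gn = (\<lambda>x::(nat\<times>nat)\<times>(nat\<times>nat). norm (b (fst (fst x)) (snd (fst x))) *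
                        (norm (ps_e u v (fst x) (fst (snd x)) (snd (snd x))) * r ^ (fst (snd x) + snd (snd x))))"
  have Gn0: "0 \<le> Gn x" for x using r by (simp add: Gn_def)
  have Gn_in: "((\<lambda>y. Gn (x, y)) has_sum (norm (b (fst x) (snd x)) * ps_N (ps_e u v x) r)) UNIV" for x
  proof -
    have "((\<lambda>y. norm (ps_e u v x (fst y) (snd y)) * r ^ (fst y + snd y)) has_sum ps_N (ps_e u v x) r) UNIV"
      using ps_e_good[OF u v r, of x] unfolding ps_good_def ps_N_def by (intro has_sum_infsum) blast
    from has_sum_cmult_right[OF this, of "norm (b (fst x) (snd x))"] show ?thesis by (simp add: Gn_def)
  qed
  have out: "(\<lambda>x. norm (b (fst x) (snd x)) * ps_N (ps_e u v x) r) summable_on UNIV"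
  proof (rule summable_on_comparison_test)
    show "(\<lambda>x. norm (b (fst x) (snd x)) * R ^ (fst x + snd x)) summable_on UNIV"
      using b by (simp add: ps_good_def)
  next
    fix x :: "nat \<times> nat"
    have "ps_N (ps_e u v x) r \<le> ps_N u r ^ fst x * ps_N v r ^ snd x" using ps_e_good[OF u v r] by blast
    also have "\<dots> \<le> R ^ fst x * R ^ snd x"
      using Nu Nv ps_N_nonneg[OF r] R by (intro mult_mono power_mono) auto
    finally show "norm (b (fst x) (snd x)) * ps_N (ps_e u v x) r \<le> norm (b (fst x) (snd x)) * R ^ (fst x + snd x)"
      by (simp add: power_add mult_left_mono)
    show "0 \<le> norm (b (fst x) (snd x)) * ps_N (ps_e u v x) r" using ps_N_nonneg[OF r] by simp
  qed
  have Gns: "Gn summable_on UNIV \<times> UNIV"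
    by (rule summable_on_SigmaI[OF Gn_in out]) (use Gn0 in auto)
  have Gns': "(\<lambda>(x, y). Gn (y, x)) summable_on UNIV \<times> UNIV"
    using Gns has_sum_swap by (metis summable_on_def)
  have Gn_in': "((\<lambda>x. Gn (x, y)) has_sum (\<Sum>x\<in>Tri (fst y + snd y). Gn (x, y))) UNIV" for y
    by (rule has_sum_finite_neutralI[OF finite_Tri]) (auto simp: Tri_def Gn_def eo)
  have sumG: "(\<lambda>y. \<Sum>x\<in>Tri (fst y + snd y). Gn (x, y)) summable_on UNIV"
  proof -
    obtain S where "((\<lambda>(x, y). Gn (y, x)) has_sum S) (UNIV \<times> UNIV)" using Gns' by (auto simp: summable_on_def)
    from has_sum_SigmaD[OF this, of "\<lambda>y. \<Sum>x\<in>Tri (fst y + snd y). Gn (x, y)"] Gn_in'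
    show ?thesis unfolding summable_on_def by auto
  qed
  show "ps_good (ps_comp b u v) r"
    unfolding ps_good_def
  proof (rule summable_on_comparison_test[OF sumG])
    fix y :: "nat \<times> nat"
    have "norm (ps_comp b u v (fst y) (snd y)) * r ^ (fst y + snd y)
       \<le> (\<Sum>x\<in>Tri (fst y + snd y). norm (b (fst x) (snd x) * ps_e u v x (fst y) (snd y))) * r ^ (fst y + snd y)"
      unfolding ps_comp_def using r by (intro mult_right_mono norm_sum) auto
    also have "\<dots> = (\<Sum>x\<in>Tri (fst y + snd y). Gn (x, y))"
      by (simp add: sum_distrib_right Gn_def norm_mult mult.assoc)
    finally show "norm (ps_comp b u v (fst y) (snd y)) * r ^ (fst y + snd y) \<le> (\<Sum>x\<in>Tri (fst y + snd y). Gn (x, y))" .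
  qed (use r in auto)
  fix z w :: complex assume z: "norm z \<le> r" and w: "norm w \<le> r"
  define U where "U = ps_ev u z w"
  define V where "V = ps_ev v z w"
  have U: "norm U \<le> R" using ps_ev_le[OF u z w] Nu by (simp add: U_def)
  have V: "norm V \<le> R" using ps_ev_le[OF v z w] Nv by (simp add: V_def)
  define G where "G = (\<lambda>x::(nat\<times>nat)\<times>(nat\<times>nat). b (fst (fst x)) (snd (fst x)) * ps_W (ps_e u v (fst x)) z w (snd x))"
  have GG: "norm (G x) \<le> Gn x" for x
    unfolding G_def Gn_def norm_mult
    by (intro mult_left_mono ps_W_norm_le[OF z w]) auto
  have Gs: "G summable_on UNIV \<times> UNIV"
  proof (rule Infinite_Sum.abs_summable_summable)
    show "(\<lambda>x. norm (G x)) summable_on UNIV \<times> UNIV"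
      by (rule summable_on_comparison_test[OF Gns]) (use GG in auto)
  qed
  have G_in: "((\<lambda>y. G (x, y)) has_sum (ps_W b U V x)) UNIV" for x
  proof -
    have "((\<lambda>y. G (x, y)) has_sum (b (fst x) (snd x) * ps_ev (ps_e u v x) z w)) UNIV"
      unfolding G_def using has_sum_cmult_right[OF ps_ev_has_sum[OF conjunct1[OF ps_e_good[OF u v r]] z w]]
      by simp
    then show ?thesis using ps_e_ev[OF u v z w, of x] by (simp add: ps_W_def U_def V_def mult.assoc)
  qed
  have Ghs: "(G has_sum ps_ev b U V) (UNIV \<times> UNIV)"
    by (rule has_sum_SigmaI[OF G_in ps_ev_has_sum[OF b U V] Gs])
  then have Ghs': "((\<lambda>(x, y). G (y, x)) has_sum ps_ev b U V) (UNIV \<times> UNIV)"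
    using has_sum_swap by blast
  have G_in': "((\<lambda>x. G (x, y)) has_sum (ps_W (ps_comp b u v) z w y)) UNIV" for y
  proof (rule has_sum_finite_neutralI[OF finite_Tri])
    show "Tri (fst y + snd y) \<subseteq> UNIV" by simp
    show "\<And>x. x \<in> UNIV - Tri (fst y + snd y) \<Longrightarrow> G (x, y) = 0"
      by (auto simp: Tri_def G_def ps_W_def eo)
    show "ps_W (ps_comp b u v) z w y = (\<Sum>x\<in>Tri (fst y + snd y). G (x, y))"
      by (simp add: ps_W_def G_def ps_comp_def sum_distrib_right mult.assoc)
  qed
  have "(ps_W (ps_comp b u v) z w has_sum ps_ev b U V) UNIV"
    using has_sum_SigmaD[OF Ghs'] G_in' by simp
  then show "ps_ev (ps_comp b u v) z w = ps_ev b (ps_ev u z w) (ps_ev v z w)"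
    unfolding U_def V_def ps_ev_def[of "ps_comp b u v"] by (rule infsumI)
qed

lemma ps_comp_nz:
  assumes "ps_comp b u v m n \<noteq> 0" "ps_ordge u a" "ps_ordge v c"
  shows "\<exists>x. b (fst x) (snd x) \<noteq> 0 \<and> fst x * a + snd x * c \<le> m + n"
proof (rule ccontr)
  assume H: "\<not> ?thesis"
  have "ps_comp b u v m n = 0" unfolding ps_comp_def
  proof (rule sum.neutral, rule ballI)
    fix x assume "x \<in> Tri (m + n)"
    show "b (fst x) (snd x) * ps_e u v x m n = 0"
    proof (cases "b (fst x) (snd x) = 0")
      case False
      then have "m + n < fst x * a + snd x * c" using H by force
      then show ?thesis using ps_e_ordge[OF assms(2,3), of x] by (simp add: ps_ordge_def)
    qed simp
  qed
  then show False using assms(1) by simp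
qed

lemma ps_e_zax:
  assumes "ps_zax u a" "ps_zax v c"
  shows "ps_zax (ps_e u v x) (fst x * a + snd x * c) \<and> ps_e u v x (fst x * a + snd x * c) 0 = u a 0 ^ fst x * v c 0 ^ snd x"
  unfolding ps_e_def
  using ps_mul_zax[OF conjunct1[OF ps_pw_zax[OF assms(1)]] conjunct1[OF ps_pw_zax[OF assms(2)]]]
    ps_pw_zax[OF assms(1)] ps_pw_zax[OF assms(2)] by simp

lemma ps_comp_zax:
  assumes u: "ps_zax u a" and v: "ps_zax v c" and a: "1 \<le> a" and c: "1 \<le> c"
    and M: "M = i0 * a + j0 * c"
    and others: "\<And>x. b (fst x) (snd x) \<noteq> 0 \<Longrightarrow> x \<noteq> (i0, j0) \<Longrightarrow> M < fst x * a + snd x * c"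
  shows "ps_zax (ps_comp b u v) M \<and> ps_comp b u v M 0 = b i0 j0 * u a 0 ^ i0 * v c 0 ^ j0"
proof -
  have t0: "b (fst x) (snd x) * ps_e u v x m 0 = 0" if "m \<le> M" "x \<noteq> (i0, j0) \<or> m < M" for x m
  proof (cases "b (fst x) (snd x) = 0")
    case False
    have "m < fst x * a + snd x * c"
    proof (cases "x = (i0, j0)")
      case True then show ?thesis using that M by auto
    next
      case False' : False
      then show ?thesis using others[OF False False'] that by linarith
    qed
    then show ?thesis using ps_e_zax[OF u v, of x] by (simp add: ps_zax_def)
  qed simp
  have "ps_comp b u v m 0 = 0" if "m < M" for m
    unfolding ps_comp_def by (rule sum.neutral) (use t0 that in auto)
  moreover have "ps_comp b u v M 0 = (\<Sum>x\<in>{(i0, j0)}. b (fst x) (snd x) * ps_e u v x M 0)"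
    unfolding ps_comp_def
  proof (rule sum.mono_neutral_right[OF finite_Tri])
    have "i0 + j0 \<le> i0 * a + j0 * c" using a c
      by (metis add_mono mult.right_neutral mult_le_mono2)
    then show "{(i0, j0)} \<subseteq> Tri (M + 0)" using M by (auto simp: Tri_def)
  qed (use t0 in auto)
  ultimately show ?thesis using ps_e_zax[OF u v, of "(i0, j0)"] M by (simp add: ps_zax_def)
qed

lemma powser_unique0:
  fixes c :: "nat \<Rightarrow> complex"
  assumes r: "0 < r" and sm: "\<And>x. norm x < r \<Longrightarrow> (\<lambda>n. c n * x ^ n) sums 0"
  shows "c k = 0"
proof (cases "k = 0")
  case True
  have "(\<lambda>n. c n * 0 ^ n) sums 0" using sm[of 0] r by simp
  then show ?thesis using True by simp
next
  case False
  show ?thesis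
  proof (rule ccontr)
    assume ck: "c k \<noteq> 0"
    show False
    proof (rule powser_0_nonzero[of r 0 c "\<lambda>_. 0" k])
      fix s :: real assume s: "0 < s" and nz: "\<And>z::complex. z \<in> cball 0 s - {0} \<Longrightarrow> (\<lambda>_. 0::complex) z \<noteq> 0"
      show False using nz[of "complex_of_real s"] s by auto
    qed (use r sm ck False in auto)
  qed
qed

lemma ps2_unique:
  assumes A: "ps2_expansion g a" and B: "ps2_expansion g a'"
  shows "a = a'"
proof -
  obtain r1 where r1: "r1 > 0" "\<And>z w. norm z < r1 \<Longrightarrow> norm w < r1 \<Longrightarrow> ((\<lambda>(i,j). a i j * z ^ i * w ^ j) has_sum g z w) UNIV"
    using A unfolding ps2_expansion_def by blast
  obtain r2 where r2: "r2 > 0" "\<And>z w. norm z < r2 \<Longrightarrow> norm w < r2 \<Longrightarrow> ((\<lambda>(i,j). a' i j * z ^ i * w ^ j) has_sum g z w) UNIV"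
    using B unfolding ps2_expansion_def by blast
  define r where "r = min r1 r2"
  define d where "d i j = a i j - a' i j" for i j
  have r: "r > 0" using r1 r2 by (simp add: r_def)
  have hs: "((\<lambda>x. d (fst x) (snd x) * z ^ fst x * w ^ snd x) has_sum 0) UNIV"
    if "norm z < r" "norm w < r" for z w
  proof -
    have "((\<lambda>x. a (fst x) (snd x) * z ^ fst x * w ^ snd x + - (a' (fst x) (snd x) * z ^ fst x * w ^ snd x)) has_sum (g z w + - g z w)) UNIV"
      using r1(2)[of z w] r2(2)[of z w] that
      by (intro has_sum_add) (auto simp: r_def case_prod_unfold has_sum_uminus)
    then show ?thesis by (simp add: d_def algebra_simps)
  qed
  have D: "summable (\<lambda>j. d i j * w ^ j) \<and> (\<lambda>j. d i j * w ^ j) sums 0" if w: "norm w < r" for w i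
  proof -
    define z0 where "z0 = complex_of_real (r / 2)"
    have z0: "norm z0 < r" "z0 \<noteq> 0" using r by (auto simp: z0_def)
    have sj: "(\<lambda>j. d i j * w ^ j) summable_on UNIV" for i
    proof -
      have "(\<lambda>x. d (fst x) (snd x) * z0 ^ fst x * w ^ snd x) summable_on ((\<lambda>j. (i, j)) ` UNIV)"
        using summable_on_subset_banach[OF has_sum_imp_summable[OF hs[OF z0(1) w]]] by blast
      then have "(\<lambda>j. d i j * z0 ^ i * w ^ j) summable_on UNIV"
        by (subst (asm) summable_on_reindex) (auto simp: inj_on_def o_def)
      then have "(\<lambda>j. z0 ^ i * (d i j * w ^ j)) summable_on UNIV"
        by (simp add: algebra_simps)
      then show ?thesis by (subst (asm) summable_on_cmult_right') (use z0 in auto)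
    qed
    define Dw where "Dw i = infsum (\<lambda>j. d i j * w ^ j) UNIV" for i
    have Dhs: "((\<lambda>j. d i j * w ^ j) has_sum Dw i) UNIV" for i
      using sj unfolding Dw_def by (rule has_sum_infsum)
    have "Dw k = 0" for k
    proof (rule powser_unique0[OF r])
      fix z :: complex assume z: "norm z < r"
      have "((\<lambda>i. Dw i * z ^ i) has_sum 0) UNIV"
      proof (rule has_sum_SigmaD[where B="\<lambda>_. UNIV"])
        show "((\<lambda>x. d (fst x) (snd x) * z ^ fst x * w ^ snd x) has_sum 0) (UNIV \<times> UNIV)"
          using hs[OF z w] by simp
        fix i :: nat
        show "((\<lambda>j. d (fst (i, j)) (snd (i, j)) * z ^ fst (i, j) * w ^ snd (i, j)) has_sum (Dw i * z ^ i)) UNIV"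
          using has_sum_cmult_right[OF Dhs[of i], of "z ^ i"] by (simp add: algebra_simps)
      qed
      then show "(\<lambda>n. Dw n * z ^ n) sums 0" by (rule has_sum_imp_sums)
    qed
    then show ?thesis using Dhs[of i] has_sum_imp_sums has_sum_imp_summable
      by (metis sums_summable)
  qed
  have "d i j = 0" for i j
    by (rule powser_unique0[OF r, of "d i" j]) (use D in blast)
  then show ?thesis by (auto simp: d_def fun_eq_iff)
qed

definition NU :: "(nat \<Rightarrow> nat \<Rightarrow> complex) \<Rightarrow> (real \<times> real) set" where
  "NU b = \<Union>{ {(x, y). x \<ge> real i \<and> y \<ge> real j} | i j. b i j \<noteq> 0 }"

lemma NP_def': "newton_polygon b = convex hull (NU b)"
  by (simp add: newton_polygon_def NU_def)

lemma NU_mem: "p \<in> NU b \<longleftrightarrow> (\<exists>i j. b i j \<noteq> 0 \<and> fst p \<ge> real i \<and> snd p \<ge> real j)"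
  by (cases p) (auto simp: NU_def)

lemma NP_up:
  assumes "p \<in> newton_polygon b" "0 \<le> h"
  shows "p + (0, h) \<in> newton_polygon b"
proof -
  have "(\<lambda>x. (0, h) + x) ` NU b \<subseteq> NU b"
  proof
    fix q assume "q \<in> (\<lambda>x. (0, h) + x) ` NU b"
    then obtain p where p: "p \<in> NU b" "q = (0,h) + p" by auto
    then obtain i j where "b i j \<noteq> 0" "fst p \<ge> real i" "snd p \<ge> real j" by (auto simp: NU_mem)
    then show "q \<in> NU b" using p(2) assms(2) unfolding NU_mem by (intro exI[of _ i] exI[of _ j]) auto
  qed
  then have "convex hull ((\<lambda>x. (0, h) + x) ` NU b) \<subseteq> convex hull NU b" by (rule hull_mono)
  moreover have "(0, h) + p \<in> convex hull ((\<lambda>x. (0, h) + x) ` NU b)"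
    unfolding convex_hull_translation using assms(1) by (auto simp: NP_def')
  ultimately show ?thesis by (auto simp: NP_def' add.commute)
qed

lemma NP_ext_support:
  assumes "v extreme_point_of newton_polygon b"
  shows "\<exists>i j. b i j \<noteq> 0 \<and> v = (real i, real j)"
proof -
  have "v \<in> NU b" using extreme_point_of_convex_hull assms by (simp add: NP_def')
  then obtain i j where ij: "b i j \<noteq> 0" "fst v \<ge> real i" "snd v \<ge> real j" by (auto simp: NU_mem)
  have sub: "NU b \<subseteq> newton_polygon b" by (simp add: NP_def' hull_subset)
  have ex: "\<And>a c. a \<in> newton_polygon b \<Longrightarrow> c \<in> newton_polygon b \<Longrightarrow> v \<notin> open_segment a c"
    using assms by (auto simp: extreme_point_of_def)
  have "fst v = real i"
  proof (rule ccontr)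
    assume "fst v \<noteq> real i"
    then have e: "fst v - real i > 0" using ij by simp
    define a where "a = v - (fst v - real i, 0)"
    define c where "c = v + (fst v - real i, 0)"
    have "a \<in> NU b" "c \<in> NU b" unfolding NU_mem using ij e by (intro exI[of _ i] exI[of _ j]; auto simp: a_def c_def)+
    then have "a \<in> newton_polygon b" "c \<in> newton_polygon b" using sub by auto
    moreover have "v = midpoint a c" "a \<noteq> c" using e
      by (auto simp: a_def c_def midpoint_def prod_eq_iff scaleR_prod_def)
    ultimately show False using ex midpoint_in_open_segment by metis
  qed
  moreover have "snd v = real j"
  proof (rule ccontr)
    assume "snd v \<noteq> real j"
    then have e: "snd v - real j > 0" using ij by simp
    define a where "a = v - (0, snd v - real j)"
    define c where "c = v + (0, snd v - real j)"
    have "a \<in> NU b" "c \<in> NU b" unfolding NU_mem using ij e by (intro exI[of _ i] exI[of _ j]; auto simp: a_def c_def)+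
    then have "a \<in> newton_polygon b" "c \<in> newton_polygon b" using sub by auto
    moreover have "v = midpoint a c" "a \<noteq> c" using e
      by (auto simp: a_def c_def midpoint_def prod_eq_iff scaleR_prod_def)
    ultimately show False using ex midpoint_in_open_segment by metis
  qed
  ultimately show ?thesis using ij by (metis prod.collapse)
qed

lemma aux_conv:
  fixes u X Y M fx fy i0 :: real
  assumes "0 \<le> u" "u \<le> 1" "X \<ge> M" "Y \<ge> M" "X = M \<longrightarrow> fx \<ge> i0" "Y = M \<longrightarrow> fy \<ge> i0"
  shows "(1 - u) * X + u * Y > M \<or> ((1 - u) * X + u * Y = M \<and> (1 - u) * fx + u * fy \<ge> i0)"
proof (cases "u = 0 \<or> u = 1")
  case True then show ?thesis using assms by auto
next
  case False
  then have u: "0 < u" "u < 1" using assms by auto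
  show ?thesis
  proof (cases "X = M \<and> Y = M")
    case True
    have "(1 - u) * fx + u * fy \<ge> (1 - u) * i0 + u * i0"
      using True assms u by (intro add_mono mult_left_mono) auto
    then show ?thesis using True by (simp add: algebra_simps)
  next
    case False
    have p1: "(1-u)*(X-M) \<ge> 0" "u*(Y-M) \<ge> 0" using assms u by simp_all
    have "X > M \<or> Y > M" using False assms by linarith
    then have "(1-u)*(X-M) > 0 \<or> u*(Y-M) > 0" using u by auto
    then have "(1-u)*(X-M) + u*(Y-M) > 0" using p1 by linarith
    then have "(1 - u) * X + u * Y > (1 - u) * M + u * M"
      by (simp add: algebra_simps)
    then show ?thesis by (simp add: algebra_simps)
  qed
qed

lemma NP_argmin:
  fixes \<alpha> \<beta> :: real
  assumes ab: "\<alpha> > 0" "\<beta> > 0" and b1: "b i1 j1 \<noteq> 0"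
  shows "\<exists>i0 j0. b i0 j0 \<noteq> 0 \<and> (real i0, real j0) extreme_point_of newton_polygon b \<and>
           (\<forall>i j. b i j \<noteq> 0 \<longrightarrow> \<alpha> * real i0 + \<beta> * real j0 \<le> \<alpha> * real i + \<beta> * real j)"
proof -
  define L where "L x = \<alpha> * real (fst x) + \<beta> * real (snd x)" for x :: "nat \<times> nat"
  define C where "C = L (i1, j1)"
  define S where "S = {x. b (fst x) (snd x) \<noteq> 0 \<and> L x \<le> C}"
  define N where "N = nat \<lceil>C / \<alpha> + C / \<beta>\<rceil>"
  have "S \<subseteq> {..N} \<times> {..N}"
  proof
    fix x assume x: "x \<in> S"
    then have "L x \<le> C" by (simp add: S_def)
    moreover have "0 \<le> \<alpha> * real (fst x)" "0 \<le> \<beta> * real (snd x)" using ab by simp_all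
    ultimately have "\<alpha> * real (fst x) \<le> C" "\<beta> * real (snd x) \<le> C" by (auto simp: L_def)
    then have "real (fst x) \<le> C / \<alpha>" "real (snd x) \<le> C / \<beta>" using ab by (auto simp: field_simps)
    moreover have "C / \<alpha> \<ge> 0" "C / \<beta> \<ge> 0" using ab by (auto simp: C_def L_def)
    ultimately have "real (fst x) \<le> real N" "real (snd x) \<le> real N" unfolding N_def by linarith+
    then show "x \<in> {..N} \<times> {..N}" by (cases x) auto
  qed
  then have finS: "finite S" by (rule finite_subset) auto
  have i1S: "(i1, j1) \<in> S" using b1 by (simp add: S_def C_def)
  define M where "M = Min (L ` S)"
  have M_le: "M \<le> L x" if "x \<in> S" for x using finS that by (simp add: M_def)
  have "M \<in> L ` S" unfolding M_def using finS i1S by (intro Min_in) auto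
  then obtain x0 where x0: "x0 \<in> S" "L x0 = M" by auto
  define G where "G = {x \<in> S. L x = M}"
  have finG: "finite G" using finS by (simp add: G_def)
  define i0 where "i0 = Min (fst ` G)"
  have "x0 \<in> G" using x0 by (simp add: G_def)
  then have "i0 \<in> fst ` G" unfolding i0_def using finG by (intro Min_in) auto
  then obtain j0 where j0: "(i0, j0) \<in> G" by force
  have i0_le: "i0 \<le> fst x" if "x \<in> G" for x using finG that by (simp add: i0_def)
  have Mall: "M \<le> L x" if "b (fst x) (snd x) \<noteq> 0" for x
  proof (cases "L x \<le> C")
    case True then show ?thesis using M_le that by (simp add: S_def)
  next
    case False then show ?thesis using M_le[OF i1S] by (simp add: C_def)
  qed
  have Meq: "i0 \<le> fst x" if "b (fst x) (snd x) \<noteq> 0" "L x = M" for x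
  proof -
    have "L x \<le> C" using that M_le[OF i1S] by (simp add: C_def)
    then show ?thesis using that i0_le by (simp add: G_def S_def)
  qed
  define H where "H = {p :: real \<times> real. \<alpha> * fst p + \<beta> * snd p > M \<or>
                        (\<alpha> * fst p + \<beta> * snd p = M \<and> fst p \<ge> real i0)}"
  have cH: "convex H"
    unfolding convex_alt
  proof (intro ballI allI impI)
    fix x y :: "real \<times> real" and u :: real
    assume x: "x \<in> H" and y: "y \<in> H" and u: "0 \<le> u \<and> u \<le> 1"
    have "(1 - u) * (\<alpha> * fst x + \<beta> * snd x) + u * (\<alpha> * fst y + \<beta> * snd y) > M \<or>
          ((1 - u) * (\<alpha> * fst x + \<beta> * snd x) + u * (\<alpha> * fst y + \<beta> * snd y) = M \<and>
           (1 - u) * fst x + u * fst y \<ge> real i0)"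
      by (rule aux_conv) (use x y u in \<open>auto simp: H_def\<close>)
    then show "(1 - u) *\<^sub>R x + u *\<^sub>R y \<in> H"
      by (simp add: H_def algebra_simps)
  qed
  have UH: "NU b \<subseteq> H"
  proof
    fix p assume "p \<in> NU b"
    then obtain i j where ij: "b i j \<noteq> 0" "fst p \<ge> real i" "snd p \<ge> real j" by (auto simp: NU_mem)
    have LM: "M \<le> \<alpha> * real i + \<beta> * real j" using Mall[of "(i,j)"] ij by (simp add: L_def)
    have le: "\<alpha> * real i + \<beta> * real j \<le> \<alpha> * fst p + \<beta> * snd p"
      using ij ab by (intro add_mono mult_left_mono) auto
    show "p \<in> H"
    proof (cases "\<alpha> * fst p + \<beta> * snd p > M")
      case True then show ?thesis by (simp add: H_def)
    next
      case False
      then have eq: "\<alpha> * fst p + \<beta> * snd p = M" using LM le by linarith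
      then have "\<alpha> * real i + \<beta> * real j = M" using LM le by linarith
      then have "i0 \<le> i" using Meq[of "(i,j)"] ij by (simp add: L_def)
      then show ?thesis using eq ij by (simp add: H_def)
    qed
  qed
  have PH: "newton_polygon b \<subseteq> H" unfolding NP_def' by (rule hull_minimal[where S=convex, OF UH cH])
  have bj0: "b i0 j0 \<noteq> 0" and Lj0: "L (i0, j0) = M" using j0 by (auto simp: G_def S_def)
  have ext: "(real i0, real j0) extreme_point_of newton_polygon b"
    unfolding extreme_point_of_def
  proof (intro conjI ballI)
    show "(real i0, real j0) \<in> newton_polygon b"
    proof -
      have "(real i0, real j0) \<in> NU b" unfolding NU_mem using bj0 by (intro exI[of _ i0] exI[of _ j0]) auto
      then show ?thesis using hull_subset[of "NU b" convex] by (auto simp: NP_def')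
    qed
    fix a c assume a: "a \<in> newton_polygon b" and c: "c \<in> newton_polygon b"
    show "(real i0, real j0) \<notin> open_segment a c"
    proof
      assume "(real i0, real j0) \<in> open_segment a c"
      then obtain u where ac: "a \<noteq> c" and u: "0 < u" "u < 1"
        and v: "(real i0, real j0) = (1 - u) *\<^sub>R a + u *\<^sub>R c"
        by (auto simp: in_segment)
      have f: "real i0 = (1 - u) * fst a + u * fst c" and s: "real j0 = (1 - u) * snd a + u * snd c"
        using v by (auto simp: prod_eq_iff)
      have aH: "a \<in> H" and cH': "c \<in> H" using a c PH by auto
      define La where "La = \<alpha> * fst a + \<beta> * snd a"
      define Lc where "Lc = \<alpha> * fst c + \<beta> * snd c"
      have LaM: "La \<ge> M" "Lc \<ge> M" using aH cH' by (auto simp: H_def La_def Lc_def)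
      have "M = (1 - u) * La + u * Lc"
        using Lj0 f s by (simp add: L_def La_def Lc_def algebra_simps)
      then have e: "(1-u)*(La-M) + u*(Lc-M) = 0" by (simp add: algebra_simps)
      have "(1-u)*(La-M) \<ge> 0" "u*(Lc-M) \<ge> 0" using LaM u by simp_all
      then have "(1-u)*(La-M) = 0" "u*(Lc-M) = 0" using e by linarith+
      then have LL: "La = M \<and> Lc = M" using u by simp
      then have fa: "fst a \<ge> real i0" "fst c \<ge> real i0" using aH cH' by (auto simp: H_def La_def Lc_def)
      have e2: "(1-u)*(fst a - real i0) + u*(fst c - real i0) = 0" using f by (simp add: algebra_simps)
      have "(1-u)*(fst a - real i0) \<ge> 0" "u*(fst c - real i0) \<ge> 0" using fa u by simp_all
      then have "(1-u)*(fst a - real i0) = 0" "u*(fst c - real i0) = 0" using e2 by linarith+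
      then have fe: "fst a = real i0" "fst c = real i0" using u by simp_all
      have "\<alpha> * fst a + \<beta> * snd a = \<alpha> * fst c + \<beta> * snd c" using LL unfolding La_def Lc_def by simp
      then have "\<alpha> * real i0 + \<beta> * snd a = \<alpha> * real i0 + \<beta> * snd c" using fe by simp
      then have "\<beta> * snd a = \<beta> * snd c" by (rule add_left_imp_eq)
      then have "snd a = snd c" using ab by simp
      moreover note fe
      ultimately show False using ac by (simp add: prod_eq_iff)
    qed
  qed
  show ?thesis
  proof (intro exI conjI allI impI)
    show "b i0 j0 \<noteq> 0" by (rule bj0)
    show "(real i0, real j0) extreme_point_of newton_polygon b" by (rule ext)
    fix i j assume "b i j \<noteq> 0"
    then show "\<alpha> * real i0 + \<beta> * real j0 \<le> \<alpha> * real i + \<beta> * real j"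
      using Mall[of "(i,j)"] Lj0 by (simp add: L_def)
  qed
qed

lemma chain_lt:
  assumes nv_mono: "\<forall>k. 1 \<le> k \<and> k < s \<longrightarrow> nv k < nv (Suc k)"
  shows "1 \<le> k \<Longrightarrow> k < k' \<Longrightarrow> k' \<le> s \<Longrightarrow> nv k < (nv k' :: nat)"
proof (induction k')
  case 0 then show ?case by simp
next
  case (Suc k')
  show ?case
  proof (cases "k = k'")
    case True then show ?thesis using nv_mono Suc.prems by auto
  next
    case False
    then have "nv k < nv k'" using Suc by auto
    moreover have "nv k' < nv (Suc k')" using nv_mono Suc.prems False by auto
    ultimately show ?thesis by simp
  qed
qed

lemma V1:
  fixes b :: "nat \<Rightarrow> nat \<Rightarrow> complex"
  assumes vertices: "{v. v extreme_point_of newton_polygon b}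
                     = {(real (nv k), real (mv k)) | k. 1 \<le> k \<and> k \<le> s}"
    and nv_mono: "\<forall>k. 1 \<le> k \<and> k < s \<longrightarrow> nv k < nv (Suc k)"
    and mv_mono: "\<forall>k. 1 \<le> k \<and> k < s \<longrightarrow> mv k > mv (Suc k)"
    and s1: "s > 1" and d_zero: "mv s = 0"
    and l1: "l1 = (real (nv s) - real (nv (s - 1))) / (real (mv (s - 1)) - real (mv s))"
    and b1: "b i1 j1 \<noteq> 0"
  shows "real i1 + l1 * real j1 \<ge> real (nv s)"
proof (rule ccontr)
  assume H: "\<not> ?thesis"
  define g where "g = real (nv s)"
  define n' where "n' = real (nv (s - 1))"
  define m' where "m' = real (mv (s - 1))"
  have sS: "Suc (s - 1) = s" using s1 by simp
  have nlt: "nv (s - 1) < nv s" using nv_mono[rule_format, of "s - 1"] s1 sS by simp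
  have mgt: "mv (s - 1) > mv s" using mv_mono[rule_format, of "s - 1"] s1 sS by simp
  have m'pos: "m' > 0" using mgt d_zero by (simp add: m'_def)
  have gn: "g > n'" using nlt by (simp add: g_def n'_def)
  have l1': "l1 = (g - n') / m'" using l1 d_zero by (simp add: g_def n'_def m'_def)
  have l1pos: "l1 > 0" using l1' m'pos gn by simp
  have Lsm1: "n' + l1 * m' = g" using l1' m'pos by simp
  obtain i0 j0 where i0: "b i0 j0 \<noteq> 0" "(real i0, real j0) extreme_point_of newton_polygon b"
      and mn: "\<forall>i j. b i j \<noteq> 0 \<longrightarrow> 1 * real i0 + l1 * real j0 \<le> 1 * real i + l1 * real j"
    using NP_argmin[of 1 l1 b i1 j1] l1pos b1 by auto
  have "real i0 + l1 * real j0 \<le> real i1 + l1 * real j1" using mn b1 by simp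
  then have Lv: "real i0 + l1 * real j0 < g" using H by (simp add: g_def)
  obtain k where k: "1 \<le> k" "k \<le> s" "real i0 = real (nv k)" "real j0 = real (mv k)"
    using i0(2) vertices by blast
  have "k \<noteq> s" using k Lv d_zero by (auto simp: g_def)
  moreover have "k \<noteq> s - 1" using k Lv Lsm1 by (auto simp: n'_def m'_def)
  ultimately have klt: "k < s - 1" using k by auto
  have nk: "nv k < nv (s - 1)" using chain_lt[OF nv_mono k(1) klt] s1 by simp
  define nk where "nk = real i0"
  define mk where "mk = real j0"
  have nkn: "nk < n'" using nk k by (simp add: nk_def n'_def)
  define t where "t = (n' - nk) / (g - nk)"
  have t: "0 < t" "t < 1" using nkn gn by (auto simp: t_def field_simps)
  have "t * (g - nk) = n' - nk" using nkn gn by (simp add: t_def)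
  moreover have "(1 - t) * nk + t * g = nk + t * (g - nk)" by (simp add: algebra_simps)
  ultimately have tx: "(1 - t) * nk + t * g = n'" by simp
  have vext: "(nk, mk) extreme_point_of newton_polygon b" using i0 by (simp add: nk_def mk_def)
  have sext: "(g, 0) extreme_point_of newton_polygon b"
  proof -
    have "(g, 0) \<in> {(real (nv k), real (mv k)) | k. 1 \<le> k \<and> k \<le> s}"
      using s1 d_zero by (auto simp: g_def intro!: exI[of _ s])
    then show ?thesis using vertices by blast
  qed
  have m1ext: "(n', m') extreme_point_of newton_polygon b"
  proof -
    have "(n', m') \<in> {(real (nv k), real (mv k)) | k. 1 \<le> k \<and> k \<le> s}"
      using s1 by (auto simp: n'_def m'_def intro!: exI[of _ "s - 1"])
    then show ?thesis using vertices by blast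
  qed
  define P where "P = (n', (1 - t) * mk)"
  have P: "P \<in> newton_polygon b"
  proof -
    have i1: "(nk, mk) \<in> newton_polygon b" "(g, 0) \<in> newton_polygon b"
      using vext sext by (auto simp: extreme_point_of_def)
    have cv: "convex (newton_polygon b)" by (simp add: NP_def')
    have "(1 - t) *\<^sub>R (nk, mk) + t *\<^sub>R (g, 0) \<in> newton_polygon b"
      using convex_alt[THEN iffD1, OF cv, rule_format, OF i1] t by simp
    moreover have "(1 - t) *\<^sub>R (nk, mk) + t *\<^sub>R (g, 0) = P" using tx by (simp add: P_def)
    ultimately show ?thesis by simp
  qed
  have "l1 * ((1 - t) * mk) < l1 * m'"
  proof -
    have "(1 - t) * (nk + l1 * mk) < (1 - t) * g" using Lv t by (simp add: nk_def mk_def)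
    then have "(1 - t) * nk + t * g + l1 * ((1 - t) * mk) < g"
      by (simp add: algebra_simps)
    then show ?thesis using tx Lsm1 by linarith
  qed
  then have hpos: "m' - (1 - t) * mk > 0" using l1pos by simp
  define h where "h = m' - (1 - t) * mk"
  have P2: "P + (0, 2 * h) \<in> newton_polygon b" using NP_up[OF P] hpos by (simp add: h_def)
  have "(n', m') = midpoint P (P + (0, 2 * h))" by (simp add: midpoint_def P_def h_def prod_eq_iff)
  moreover have "P \<noteq> P + (0, 2 * h)" using hpos by (simp add: h_def prod_eq_iff)
  ultimately have "(n', m') \<in> open_segment P (P + (0, 2 * h))" using midpoint_in_open_segment by metis
  then show False using m1ext P P2 by (auto simp: extreme_point_of_def)
qed

definition fX :: "nat \<Rightarrow> nat \<Rightarrow> complex" where "fX i j = (if i = 1 \<and> j = 0 then 1 else 0)"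
definition fY :: "nat \<Rightarrow> nat \<Rightarrow> complex" where "fY i j = (if i = 0 \<and> j = 1 then 1 else 0)"
definition fZ :: "nat \<Rightarrow> nat \<Rightarrow> complex" where "fZ i j = 0"
definition pa :: "(nat \<Rightarrow> complex) \<Rightarrow> nat \<Rightarrow> nat \<Rightarrow> complex" where "pa a i j = (if j = 0 then a i else 0)"

lemma ps_W_eq: "ps_W c z w = (\<lambda>x. c (fst x) (snd x) * z ^ fst x * w ^ snd x)"
  by (simp add: fun_eq_iff ps_W_def)

lemma fX_props: "0 \<le> r \<Longrightarrow> ps_good fX r \<and> ps_ev fX z w = z"
proof -
  assume r: "0 \<le> r"
  have "((\<lambda>x. norm (fX (fst x) (snd x)) * r ^ (fst x + snd x)) has_sum r) UNIV"
    by (rule has_sum_finite_neutralI[where B="{(1,0)}"]) (auto simp: fX_def r)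
  moreover have "(ps_W fX z w has_sum z) UNIV"
    by (rule has_sum_finite_neutralI[where B="{(1,0)}"]) (auto simp: fX_def ps_W_def)
  ultimately show ?thesis unfolding ps_good_def ps_ev_def using has_sum_imp_summable infsumI by blast
qed

lemma fY_props: "0 \<le> r \<Longrightarrow> ps_good fY r \<and> ps_ev fY z w = w"
proof -
  assume r: "0 \<le> r"
  have "((\<lambda>x. norm (fY (fst x) (snd x)) * r ^ (fst x + snd x)) has_sum r) UNIV"
    by (rule has_sum_finite_neutralI[where B="{(0,1)}"]) (auto simp: fY_def r)
  moreover have "(ps_W fY z w has_sum w) UNIV"
    by (rule has_sum_finite_neutralI[where B="{(0,1)}"]) (auto simp: fY_def ps_W_def)
  ultimately show ?thesis unfolding ps_good_def ps_ev_def using has_sum_imp_summable infsumI by blast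
qed

lemma fZ_props: "ps_good fZ r \<and> ps_ev fZ z w = 0 \<and> ps_N fZ r = 0"
  by (simp add: ps_good_def ps_ev_def ps_N_def fZ_def ps_W_def)

lemma ordge1: "ps_ordge c 1 \<longleftrightarrow> c 0 0 = 0"
  by (auto simp: ps_ordge_def)

lemma ps_comp00: "c 0 0 = 0 \<Longrightarrow> ps_comp c u v 0 0 = 0"
  unfolding ps_comp_def by (rule sum.neutral) (auto simp: Tri_def)

lemma ps_shrink:
  assumes c0: "c 0 0 = 0" and g: "ps_good c r" and r': "0 < r'" "r' \<le> r"
  shows "ps_good c r' \<and> ps_N c r' \<le> (r' / r) * ps_N c r"
proof -
  have r: "0 < r" using r' by simp
  define f where "f = (\<lambda>x::nat \<times> nat. norm (c (fst x) (snd x)) * r ^ (fst x + snd x))"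
  define f' where "f' = (\<lambda>x::nat \<times> nat. norm (c (fst x) (snd x)) * r' ^ (fst x + snd x))"
  have le: "f' x \<le> (r' / r) * f x" for x
  proof (cases "fst x + snd x = 0")
    case True then have "fst x = 0" "snd x = 0" by auto
    then show ?thesis using c0 by (simp add: f_def f'_def)
  next
    case False
    then obtain k where k: "fst x + snd x = Suc k" using not0_implies_Suc by blast
    have q: "0 \<le> r' / r" "r' / r \<le> 1" using r r' by auto
    have "r' ^ Suc k = (r' / r) * ((r' / r) ^ k * r ^ Suc k)" using r by (simp add: field_simps power_divide)
    also have "\<dots> \<le> (r' / r) * (1 * r ^ Suc k)"
      using q r by (intro mult_left_mono mult_right_mono power_le_one) auto
    finally have "r' ^ Suc k \<le> (r' / r) * r ^ Suc k" by simp
    then show ?thesis unfolding f_def f'_def k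
      by (metis (no_types, lifting) mult.left_commute mult_left_mono norm_ge_zero)
  qed
  have fs: "f summable_on UNIV" using g by (simp add: ps_good_def f_def)
  have fs2: "(\<lambda>x. (r' / r) * f x) summable_on UNIV" by (rule summable_on_cmult_right[OF fs])
  have f's: "f' summable_on UNIV"
    by (rule summable_on_comparison_test[OF fs2]) (use le r' in \<open>auto simp: f'_def\<close>)
  have "infsum f' UNIV \<le> infsum (\<lambda>x. (r' / r) * f x) UNIV"
    by (rule infsum_mono[OF f's fs2 le])
  also have "\<dots> = (r' / r) * infsum f UNIV" by (rule infsum_cmult_right[OF fs])
  finally show ?thesis using f's unfolding ps_good_def ps_N_def f_def f'_def by simp
qed

lemma has_sum_ext0:
  assumes "(f has_sum S) (UNIV :: nat set)"
  shows "((\<lambda>x::nat\<times>nat. if snd x = 0 then f (fst x) else 0) has_sum S) UNIV"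
proof -
  have inj: "inj_on (\<lambda>i::nat. (i, 0::nat)) UNIV" by (auto simp: inj_on_def)
  have "((\<lambda>x::nat\<times>nat. if snd x = 0 then f (fst x) else 0) has_sum S) ((\<lambda>i. (i, 0)) ` UNIV)"
    by (subst has_sum_reindex[OF inj]) (use assms in \<open>simp add: o_def\<close>)
  then show ?thesis
    by (rule has_sum_cong_neutral[THEN iffD1, rotated -1]) auto
qed

lemma p_exp_props:
  assumes "ps1_expansion p a"
  shows "\<exists>R>0. ps_good (pa a) R \<and> (\<forall>x y. norm x \<le> R \<longrightarrow> ps_ev (pa a) x y = p x)"
proof -
  obtain r where r: "r > 0" "\<And>z. norm z < r \<Longrightarrow> ((\<lambda>k. a k * z ^ k) has_sum p z) UNIV"
    using assms unfolding ps1_expansion_def by blast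
  define R where "R = r / 2"
  have R: "R > 0" "R < r" using r by (auto simp: R_def)
  have "(\<lambda>k. a k * complex_of_real R ^ k) summable_on UNIV"
    using r(2)[of "complex_of_real R"] R has_sum_imp_summable by auto
  then have "(\<lambda>k. norm (a k * complex_of_real R ^ k)) summable_on UNIV"
    by (rule summable_on_iff_abs_summable_on_complex[THEN iffD1])
  then have "((\<lambda>k. norm (a k) * R ^ k) has_sum (infsum (\<lambda>k. norm (a k) * R ^ k) UNIV)) UNIV"
    using R by (simp add: norm_mult norm_power)
  from has_sum_ext0[OF this] have "ps_good (pa a) R"
    unfolding ps_good_def pa_def using has_sum_imp_summable
    by (smt (verit, ccfv_SIG) has_sum_cong mult_eq_0_iff norm_zero add_0_right)
  moreover have "ps_ev (pa a) x y = p x" if x: "norm x \<le> R" for x y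
  proof -
    have "((\<lambda>k. a k * x ^ k) has_sum p x) UNIV" using r(2)[of x] x R by simp
    from has_sum_ext0[OF this] have "(ps_W (pa a) x y has_sum p x) UNIV"
      by (rule has_sum_cong[THEN iffD1, rotated]) (auto simp: ps_W_def pa_def)
    then show ?thesis unfolding ps_ev_def by (rule infsumI)
  qed
  ultimately show ?thesis using R by blast
qed

lemma q_exp_props:
  assumes "ps2_expansion q b"
  shows "\<exists>R>0. ps_good b R \<and> (\<forall>x y. norm x \<le> R \<longrightarrow> norm y \<le> R \<longrightarrow> ps_ev b x y = q x y)"
proof -
  obtain r where r: "r > 0" "\<And>z w. norm z < r \<Longrightarrow> norm w < r \<Longrightarrow> ((\<lambda>(i,j). b i j * z ^ i * w ^ j) has_sum q z w) UNIV"
    using assms unfolding ps2_expansion_def by blast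
  define R where "R = r / 2"
  have R: "R > 0" "R < r" using r by (auto simp: R_def)
  have hs: "(ps_W b z w has_sum q z w) UNIV" if "norm z < r" "norm w < r" for z w
    using r(2)[OF that] by (simp add: ps_W_eq case_prod_unfold)
  have "ps_W b (complex_of_real R) (complex_of_real R) summable_on UNIV"
    using hs[of "complex_of_real R" "complex_of_real R"] R has_sum_imp_summable by auto
  then have "(\<lambda>x. norm (ps_W b (complex_of_real R) (complex_of_real R) x)) summable_on UNIV"
    by (rule summable_on_iff_abs_summable_on_complex[THEN iffD1])
  then have "ps_good b R" unfolding ps_good_def ps_W_def
    using R by (simp add: norm_mult norm_power power_add mult.assoc)
  moreover have "ps_ev b x y = q x y" if "norm x \<le> R" "norm y \<le> R" for x y
    unfolding ps_ev_def by (rule infsumI, rule hs) (use that R in auto)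
  ultimately show ?thesis using R by blast
qed

primrec PQ :: "(nat \<Rightarrow> complex) \<Rightarrow> (nat \<Rightarrow> nat \<Rightarrow> complex) \<Rightarrow> nat \<Rightarrow> (nat \<Rightarrow> nat \<Rightarrow> complex) \<times> (nat \<Rightarrow> nat \<Rightarrow> complex)" where
  "PQ a b 0 = (fX, fY)"
| "PQ a b (Suc n) = (ps_comp (pa a) (fst (PQ a b n)) fZ, ps_comp b (fst (PQ a b n)) (snd (PQ a b n)))"

lemma shrink_arith:
  fixes r R Np Nq :: real
  assumes "r > 0" "R > 0" "Np \<ge> 0" "Nq \<ge> 0"
  defines "r' \<equiv> min r (R * r / (Np + Nq + 1))"
  shows "r' > 0" "r' \<le> r" "(r' / r) * Np \<le> R" "(r' / r) * Nq \<le> R"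
proof -
  show "r' > 0" "r' \<le> r" using assms by (auto simp: r'_def)
  have "r' / r \<le> R / (Np + Nq + 1)"
    using assms by (auto simp: r'_def divide_simps min_def)
  moreover have "R / (Np + Nq + 1) * Np \<le> R" "R / (Np + Nq + 1) * Nq \<le> R"
    using assms by (auto simp: divide_simps)
  moreover have "0 \<le> r' / r" using assms by (auto simp: r'_def)
  ultimately show "(r' / r) * Np \<le> R" "(r' / r) * Nq \<le> R"
    using assms by (meson mult_right_mono order_trans)+
qed

lemma PQ_exists:
  assumes R: "R > 0" and ga: "ps_good (pa a) R" and gb: "ps_good b R"
    and ep: "\<forall>x y. norm x \<le> R \<longrightarrow> ps_ev (pa a) x y = p x"
    and eq: "\<forall>x y. norm x \<le> R \<longrightarrow> norm y \<le> R \<longrightarrow> ps_ev b x y = q x y"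
    and a0: "a 0 = 0" and b0: "b 0 0 = 0"
  shows "\<exists>r>0. ps_good (fst (PQ a b n)) r \<and> ps_good (snd (PQ a b n)) r \<and>
      fst (PQ a b n) 0 0 = 0 \<and> snd (PQ a b n) 0 0 = 0 \<and>
     (\<forall>z w. norm z \<le> r \<longrightarrow> norm w \<le> r \<longrightarrow>
        (((\<lambda>(x, y). (p x, q x y)) ^^ n) (z, w)) = (ps_ev (fst (PQ a b n)) z w, ps_ev (snd (PQ a b n)) z w))"
proof (induction n)
  case 0
  have "fX 0 0 = 0" "fY 0 0 = 0" by (simp_all add: fX_def fY_def)
  then show ?case using fX_props[of 1] fY_props[of 1] by (intro exI[of _ 1]) auto
next
  case (Suc n)
  obtain P Q where PQn: "PQ a b n = (P, Q)" by (cases "PQ a b n")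
  obtain r where r: "r > 0" and gP: "ps_good P r" and gQ: "ps_good Q r" and P0: "P 0 0 = 0" and Q0: "Q 0 0 = 0"
    and F: "\<And>z w. norm z \<le> r \<Longrightarrow> norm w \<le> r \<Longrightarrow>
        (((\<lambda>(x, y). (p x, q x y)) ^^ n) (z, w)) = (ps_ev P z w, ps_ev Q z w)"
    using Suc.IH PQn by auto
  define r' where "r' = min r (R * r / (ps_N P r + ps_N Q r + 1))"
  note sa = shrink_arith[OF r R ps_N_nonneg[of r P] ps_N_nonneg[of r Q], folded r'_def]
  have r'0: "r' > 0" "r' \<le> r" using sa r by auto
  note shP = ps_shrink[OF P0 gP r'0] and shQ = ps_shrink[OF Q0 gQ r'0]
  have gP': "ps_good P r'" and gQ': "ps_good Q r'" using shP shQ by auto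
  have NP: "ps_N P r' \<le> R" using shP sa r by linarith
  have NQ: "ps_N Q r' \<le> R" using shQ sa r by linarith
  have oP: "ps_ordge P 1" and oQ: "ps_ordge Q 1" and oZ: "ps_ordge fZ 1"
    using P0 Q0 by (auto simp: ps_ordge_def fZ_def)
  have NZ: "ps_N fZ r' \<le> R" using fZ_props R by simp
  have pa0: "pa a 0 0 = 0" using a0 by (simp add: pa_def)
  note c1 = ps_comp_main[OF ga gP' conjunct1[OF fZ_props] less_imp_le[OF r'0(1)] oP oZ NP NZ]
  note c2 = ps_comp_main[OF gb gP' gQ' less_imp_le[OF r'0(1)] oP oQ NP NQ]
  show ?case
  proof (rule exI[of _ r'], intro conjI allI impI)
    show "r' > 0" by (rule r'0)
    show "ps_good (fst (PQ a b (Suc n))) r'" using c1 PQn by simp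
    show "ps_good (snd (PQ a b (Suc n))) r'" using c2 PQn by simp
    show "fst (PQ a b (Suc n)) 0 0 = 0" using PQn ps_comp00[of "pa a", OF pa0] by simp
    show "snd (PQ a b (Suc n)) 0 0 = 0" using PQn ps_comp00[of b, OF b0] by simp
    fix z w :: complex assume z: "norm z \<le> r'" and w: "norm w \<le> r'"
    have Fn: "(((\<lambda>(x, y). (p x, q x y)) ^^ n) (z, w)) = (ps_ev P z w, ps_ev Q z w)"
      using F z w r'0 by auto
    have U: "norm (ps_ev P z w) \<le> R" using ps_ev_le[OF gP' z w] NP by linarith
    have V: "norm (ps_ev Q z w) \<le> R" using ps_ev_le[OF gQ' z w] NQ by linarith
    have "p (ps_ev P z w) = ps_ev (pa a) (ps_ev P z w) (ps_ev fZ z w)" using ep U by simp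
    also have "\<dots> = ps_ev (ps_comp (pa a) P fZ) z w" using c1(2)[OF z w] by simp
    finally have e1: "p (ps_ev P z w) = ps_ev (ps_comp (pa a) P fZ) z w" .
    have "q (ps_ev P z w) (ps_ev Q z w) = ps_ev b (ps_ev P z w) (ps_ev Q z w)" using eq U V by simp
    also have "\<dots> = ps_ev (ps_comp b P Q) z w" using c2(2)[OF z w] by simp
    finally have e2: "q (ps_ev P z w) (ps_ev Q z w) = ps_ev (ps_comp b P Q) z w" .
    show "(((\<lambda>(x, y). (p x, q x y)) ^^ Suc n) (z, w)) = (ps_ev (fst (PQ a b (Suc n))) z w, ps_ev (snd (PQ a b (Suc n))) z w)"
      using Fn e1 e2 PQn by simp
  qed
qed

lemma V3_arith:
  fixes I J G D l :: real
  assumes l: "l > 1" and D: "D \<ge> 1" and I: "I \<ge> 0" and J: "J \<ge> 0" and G: "G > 0"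
    and lD: "l * D < G" and V: "I + l * J \<ge> G"
  shows "l * D * I + G * J > G * D"
proof (cases "l * l * D \<le> G")
  case True
  have "G * J \<ge> l * l * D * J" using True J by (simp add: mult_right_mono)
  then have h1: "l * D * I + G * J \<ge> l * D * (I + l * J)" by (simp add: algebra_simps)
  have h2: "l * D * (I + l * J) \<ge> l * D * G" using V l D by (intro mult_left_mono) auto
  have h3: "l * D * G > G * D" using l D G by simp
  show ?thesis using h1 h2 h3 by linarith
next
  case False
  then have q: "l * D \<ge> G / l" using l by (simp add: field_simps)
  have "l * D * I \<ge> (G / l) * I" by (rule mult_right_mono[OF q I])
  moreover have "G * J = (G / l) * (l * J)" using l by simp
  ultimately have h1: "l * D * I + G * J \<ge> (G / l) * (I + l * J)" by (simp add: algebra_simps)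
  have h2: "(G / l) * (I + l * J) \<ge> (G / l) * G" using V G l by (intro mult_left_mono) auto
  have "G / l > D" using lD l by (simp add: field_simps)
  then have h3: "(G / l) * G > D * G" by (rule mult_strict_right_mono[OF _ G])
  show ?thesis using h1 h2 h3 by (simp add: mult.commute)
qed

lemma V2_arith:
  fixes I J G D l :: real
  assumes l: "l > 0" and D: "D \<ge> 1" and I: "I \<ge> 0" and J: "J \<ge> 0" and G: "G > 0"
    and lD: "l * D < G" and V: "I + l * J \<ge> G" and ne: "J = 0 \<longrightarrow> I > G"
  shows "D * I + G * J > G * D"
proof (cases "J = 0")
  case True then show ?thesis using ne D G by simp
next
  case False
  then have Jp: "J > 0" using J by simp
  have "D * I \<ge> D * (G - l * J)" using V D by (intro mult_left_mono) auto
  moreover have "J * (G - l * D) > 0" using Jp lD by simp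
  ultimately show ?thesis by (simp add: algebra_simps)
qed

definition ordc :: "(nat \<Rightarrow> nat \<Rightarrow> complex) \<Rightarrow> nat" where
  "ordc c = (LEAST k. \<exists>i j. i + j = k \<and> c i j \<noteq> 0)"

lemma ordc_le: "c i j \<noteq> 0 \<Longrightarrow> ordc c \<le> i + j"
  unfolding ordc_def by (rule Least_le) blast

lemma ordc_att: "c i j \<noteq> 0 \<Longrightarrow> \<exists>i' j'. i' + j' = ordc c \<and> c i' j' \<noteq> 0"
  unfolding ordc_def by (rule LeastI) blast

lemma ordc_ordge: "ps_ordge c (ordc c)"
  unfolding ps_ordge_def ordc_def using not_less_Least by blast

lemma P_facts:
  assumes d1: "\<delta> \<ge> 1" and ad: "a \<delta> \<noteq> 0" and al: "\<forall>k<\<delta>. a k = 0"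
  shows "ps_ordge (fst (PQ a b k)) (\<delta> ^ k) \<and> ps_zax (fst (PQ a b k)) (\<delta> ^ k) \<and> fst (PQ a b k) (\<delta> ^ k) 0 \<noteq> 0"
proof (induction k)
  case 0 then show ?case by (simp add: ps_ordge_def ps_zax_def fX_def)
next
  case (Suc k)
  define u where "u = fst (PQ a b k)"
  have u: "ps_ordge u (\<delta> ^ k)" "ps_zax u (\<delta> ^ k)" "u (\<delta> ^ k) 0 \<noteq> 0" using Suc by (simp_all add: u_def)
  have eq: "fst (PQ a b (Suc k)) = ps_comp (pa a) u fZ" by (simp add: u_def)
  have dk: "\<delta> ^ k \<ge> 1" using d1 by simp
  have pa_nz: "snd x = 0 \<and> fst x \<ge> \<delta>" if "pa a (fst x) (snd x) \<noteq> 0" for x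
  proof -
    have s0: "snd x = 0" using that by (simp add: pa_def split: if_splits)
    then have "a (fst x) \<noteq> 0" using that by (simp add: pa_def)
    then have "fst x \<ge> \<delta>" using al not_le by blast
    then show ?thesis using s0 by simp
  qed
  have o: "ps_ordge (ps_comp (pa a) u fZ) (\<delta> ^ Suc k)"
    unfolding ps_ordge_def
  proof (intro allI impI)
    fix i j assume ij: "i + j < \<delta> ^ Suc k"
    show "ps_comp (pa a) u fZ i j = 0"
    proof (rule ccontr)
      assume "ps_comp (pa a) u fZ i j \<noteq> 0"
      from ps_comp_nz[OF this u(1), of 1] obtain x where
        x: "pa a (fst x) (snd x) \<noteq> 0" "fst x * \<delta> ^ k + snd x * 1 \<le> i + j"
        by (auto simp: ps_ordge_def fZ_def)
      have "\<delta> \<le> fst x" using pa_nz[OF x(1)] by simp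
      then have m: "\<delta> * \<delta> ^ k \<le> fst x * \<delta> ^ k" by (rule mult_le_mono1)
      show False using m x(2) ij unfolding power_Suc by linarith
    qed
  qed
  have z: "ps_zax (ps_comp (pa a) u fZ) (\<delta> ^ Suc k) \<and>
           ps_comp (pa a) u fZ (\<delta> ^ Suc k) 0 = pa a \<delta> 0 * u (\<delta> ^ k) 0 ^ \<delta> * fZ (\<delta> ^ Suc k + 1) 0 ^ 0"
  proof (rule ps_comp_zax[OF u(2), of fZ "\<delta> ^ Suc k + 1"])
    show "ps_zax fZ (\<delta> ^ Suc k + 1)" by (simp add: ps_zax_def fZ_def)
    show "1 \<le> \<delta> ^ k" by (rule dk)
    show "1 \<le> \<delta> ^ Suc k + 1" by simp
    show "\<delta> ^ Suc k = \<delta> * \<delta> ^ k + 0 * (\<delta> ^ Suc k + 1)" by simp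
    fix x assume x: "pa a (fst x) (snd x) \<noteq> 0" "x \<noteq> (\<delta>, 0)"
    have "snd x = 0" "fst x > \<delta>" using pa_nz[OF x(1)] x(2) by (auto simp: prod_eq_iff)
    then show "\<delta> ^ Suc k < fst x * \<delta> ^ k + snd x * (\<delta> ^ Suc k + 1)"
      using dk d1 by simp
  qed
  show ?case unfolding eq using o z u(3) ad by (simp add: pa_def)
qed

lemma Q_axis:
  assumes Pf: "\<And>k. ps_zax (fst (PQ a b k)) (\<delta> ^ k) \<and> fst (PQ a b k) (\<delta> ^ k) 0 \<noteq> 0"
    and Q1: "snd (PQ a b 1) = b" and zb: "ps_zax b \<gamma>" and bg: "b \<gamma> 0 \<noteq> 0"
    and g1: "\<gamma> \<ge> 1" and d1: "\<delta> \<ge> 1"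
    and V2: "\<And>i j. b i j \<noteq> 0 \<Longrightarrow> (i, j) \<noteq> (\<gamma>, 0) \<Longrightarrow> \<gamma> * \<delta> < \<delta> * i + \<gamma> * j"
  shows "ps_zax (snd (PQ a b (Suc m))) (\<gamma> * \<delta> ^ m) \<and> snd (PQ a b (Suc m)) (\<gamma> * \<delta> ^ m) 0 \<noteq> 0"
proof (induction m)
  case 0 then show ?case using Q1 zb bg by simp
next
  case (Suc m)
  define u where "u = fst (PQ a b (Suc m))"
  define v where "v = snd (PQ a b (Suc m))"
  have eq: "snd (PQ a b (Suc (Suc m))) = ps_comp b u v" by (simp add: u_def v_def)
  have u: "ps_zax u (\<delta> ^ Suc m)" "u (\<delta> ^ Suc m) 0 \<noteq> 0" using Pf[of "Suc m"] by (simp_all add: u_def)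
  have v: "ps_zax v (\<gamma> * \<delta> ^ m)" "v (\<gamma> * \<delta> ^ m) 0 \<noteq> 0" using Suc by (simp_all add: v_def)
  have dm: "\<delta> ^ m \<ge> 1" using d1 by simp
  have z: "ps_zax (ps_comp b u v) (\<gamma> * \<delta> ^ Suc m) \<and>
           ps_comp b u v (\<gamma> * \<delta> ^ Suc m) 0 = b \<gamma> 0 * u (\<delta> ^ Suc m) 0 ^ \<gamma> * v (\<gamma> * \<delta> ^ m) 0 ^ 0"
  proof (rule ps_comp_zax[OF u(1) v(1)])
    show "1 \<le> \<delta> ^ Suc m" using d1 by simp
    show "1 \<le> \<gamma> * \<delta> ^ m" using g1 dm by (metis mult_le_mono nat_mult_1)
    show "\<gamma> * \<delta> ^ Suc m = \<gamma> * \<delta> ^ Suc m + 0 * (\<gamma> * \<delta> ^ m)" by simp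
    fix x assume x: "b (fst x) (snd x) \<noteq> 0" "x \<noteq> (\<gamma>, 0)"
    have "\<gamma> * \<delta> < \<delta> * fst x + \<gamma> * snd x" using V2[of "fst x" "snd x"] x by simp
    then have "(\<gamma> * \<delta>) * \<delta> ^ m < (\<delta> * fst x + \<gamma> * snd x) * \<delta> ^ m"
      using dm by (intro mult_less_mono1) (auto simp: Suc_le_eq)
    then show "\<gamma> * \<delta> ^ Suc m < fst x * \<delta> ^ Suc m + snd x * (\<gamma> * \<delta> ^ m)"
      by (simp add: algebra_simps)
  qed
  show ?case unfolding eq using z u(2) bg by simp
qed

lemma ps_good_mono:
  assumes "ps_good c r" "0 \<le> r'" "r' \<le> r"
  shows "ps_good c r'"
  using assms(1) unfolding ps_good_def
  by (rule summable_on_comparison_test) (use assms in \<open>auto intro!: mult_left_mono power_mono\<close>)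

theorem theorem4p3:
  fixes p :: "complex \<Rightarrow> complex" and q :: "complex \<Rightarrow> complex \<Rightarrow> complex"
    and a :: "nat \<Rightarrow> complex" and b :: "nat \<Rightarrow> nat \<Rightarrow> complex"
    and \<delta> s :: nat and nv mv :: "nat \<Rightarrow> nat"
  assumes p_exp: "ps1_expansion p a"
    and delta_pos: "\<delta> \<ge> 1" and a_delta: "a \<delta> \<noteq> 0" and a_low: "\<forall>k<\<delta>. a k = 0"
    and q_exp: "ps2_expansion q b" and b00: "b 0 0 = 0"
    and q_nonzero: "\<exists>i j. b i j \<noteq> 0"
    and vertices: "{v. v extreme_point_of newton_polygon b}
                     = {(real (nv k), real (mv k)) | k. 1 \<le> k \<and> k \<le> s}"
    and nv_mono: "\<forall>k. 1 \<le> k \<and> k < s \<longrightarrow> nv k < nv (Suc k)"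
    and mv_mono: "\<forall>k. 1 \<le> k \<and> k < s \<longrightarrow> mv k > mv (Suc k)"
    and case2: "s > 1" "real \<delta> \<le> T_int nv mv (s - 1)"
    and d_zero: "mv s = 0"
    and delta_lt: "real \<delta> < T_int nv mv (s - 1)"
  shows "(let \<gamma> = nv s;
              l1 = (real (nv s) - real (nv (s - 1))) / (real (mv (s - 1)) - real (mv s));
              \<gamma>n = (\<lambda>n. \<gamma> * \<delta> ^ (n - 1))
          in (l1 \<le> 1 \<longrightarrow> (\<forall>n\<ge>1. germ_ord (skewQ p q n) = \<gamma>n n))
           \<and> (l1 > 1 \<longrightarrow>
                real \<gamma> / l1 \<le> real (germ_ord q) \<and> germ_ord q < \<gamma>
              \<and> (\<forall>n\<ge>2. real (\<gamma>n n) / l1 < real (germ_ord (skewQ p q n))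
                        \<and> germ_ord (skewQ p q n) \<le> \<gamma>n n)))"
proof -
  define \<gamma> where "\<gamma> = nv s"
  define l1 where "l1 = (real (nv s) - real (nv (s - 1))) / (real (mv (s - 1)) - real (mv s))"
  have sS: "Suc (s - 1) = s" using case2(1) by simp
  have nlt: "nv (s - 1) < nv s" using nv_mono[rule_format, of "s - 1"] case2(1) sS by simp
  have mgt: "mv (s - 1) > 0" using mv_mono[rule_format, of "s - 1"] case2(1) sS d_zero by simp
  have l1pos: "l1 > 0" using nlt mgt d_zero by (simp add: l1_def)
  have g1: "\<gamma> \<ge> 1" using nlt by (simp add: \<gamma>_def)
  have V1': "real i + l1 * real j \<ge> real \<gamma>" if "b i j \<noteq> 0" for i j
    using V1[OF vertices nv_mono mv_mono case2(1) d_zero l1_def that] by (simp add: \<gamma>_def)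
  have l1m: "l1 * real (mv (s - 1)) = real \<gamma> - real (nv (s - 1))"
    using mgt d_zero by (simp add: l1_def \<gamma>_def)
  have lT: "l1 * T_int nv mv (s - 1) = real \<gamma>"
  proof -
    have "T_int nv mv (s - 1) = real (mv (s - 1)) + real (mv (s - 1)) * real (nv (s - 1)) / (real \<gamma> - real (nv (s - 1)))"
      unfolding T_int_def using sS d_zero by (simp add: \<gamma>_def)
    moreover have "real \<gamma> - real (nv (s - 1)) > 0" using nlt by (simp add: \<gamma>_def)
    ultimately show ?thesis using mgt d_zero by (simp add: l1_def \<gamma>_def field_simps)
  qed
  have lD: "l1 * real \<delta> < real \<gamma>" using delta_lt l1pos lT by (metis mult_strict_left_mono)
  have ext_sup: "b (nv k) (mv k) \<noteq> 0" if "1 \<le> k" "k \<le> s" for k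
  proof -
    have "(real (nv k), real (mv k)) extreme_point_of newton_polygon b" using vertices that by blast
    from NP_ext_support[OF this] show ?thesis by auto
  qed
  have bg: "b \<gamma> 0 \<noteq> 0" using ext_sup[of s] d_zero case2(1) by (simp add: \<gamma>_def)
  have bs1: "b (nv (s - 1)) (mv (s - 1)) \<noteq> 0" using ext_sup[of "s - 1"] case2(1) by simp
  have zb: "ps_zax b \<gamma>"
    unfolding ps_zax_def
  proof (intro allI impI)
    fix i assume i: "i < \<gamma>"
    show "b i 0 = 0"
    proof (rule ccontr)
      assume "b i 0 \<noteq> 0"
      from V1'[OF this] i show False by simp
    qed
  qed
  have V2: "\<gamma> * \<delta> < \<delta> * i + \<gamma> * j" if "b i j \<noteq> 0" "(i, j) \<noteq> (\<gamma>, 0)" for i j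
  proof -
    have ne: "real j = 0 \<longrightarrow> real i > real \<gamma>"
    proof
      assume "real j = 0"
      then have "j = 0" by simp
      then have "i \<noteq> \<gamma>" "real i \<ge> real \<gamma>" using that V1'[OF that(1)] by auto
      then show "real i > real \<gamma>" by simp
    qed
    have "real \<delta> * real i + real \<gamma> * real j > real \<gamma> * real \<delta>"
      by (rule V2_arith[OF l1pos _ _ _ _ lD V1'[OF that(1)] ne]) (use delta_pos g1 in auto)
    then show ?thesis by (metis of_nat_add of_nat_less_iff of_nat_mult)
  qed
  have V2': "\<gamma> * \<delta> \<le> \<delta> * i + \<gamma> * j" if "b i j \<noteq> 0" for i j
  proof (cases "(i, j) = (\<gamma>, 0)")
    case True then show ?thesis by simp
  next
    case False then show ?thesis using V2[OF that False] by simp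
  qed
  obtain R1 where R1: "R1 > 0" "ps_good (pa a) R1" "\<forall>x y. norm x \<le> R1 \<longrightarrow> ps_ev (pa a) x y = p x"
    using p_exp_props[OF p_exp] by blast
  obtain R2 where R2: "R2 > 0" "ps_good b R2" "\<forall>x y. norm x \<le> R2 \<longrightarrow> norm y \<le> R2 \<longrightarrow> ps_ev b x y = q x y"
    using q_exp_props[OF q_exp] by blast
  define R where "R = min R1 R2"
  have R: "R > 0" using R1 R2 by (simp add: R_def)
  have ga: "ps_good (pa a) R" using ps_good_mono[OF R1(2), of R] R by (simp add: R_def)
  have gb: "ps_good b R" using ps_good_mono[OF R2(2), of R] R by (simp add: R_def)
  have ep: "\<forall>x y. norm x \<le> R \<longrightarrow> ps_ev (pa a) x y = p x" using R1(3) by (simp add: R_def)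
  have eq: "\<forall>x y. norm x \<le> R \<longrightarrow> norm y \<le> R \<longrightarrow> ps_ev b x y = q x y" using R2(3) by (simp add: R_def)
  have a0: "a 0 = 0" using a_low delta_pos by simp
  note ex = PQ_exists[OF R ga gb ep eq a0 b00]
  define P where "P k = fst (PQ a b k)" for k
  define Q where "Q k = snd (PQ a b k)" for k
  have skew: "ps2_expansion (skewQ p q n) (Q n)" for n
  proof -
    obtain r where r: "r > 0" "ps_good (Q n) r"
      and F: "\<And>z w. norm z \<le> r \<Longrightarrow> norm w \<le> r \<Longrightarrow>
        (((\<lambda>(x, y). (p x, q x y)) ^^ n) (z, w)) = (ps_ev (P n) z w, ps_ev (Q n) z w)"
      using ex[of n] unfolding P_def Q_def by blast
    show ?thesis unfolding ps2_expansion_def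
    proof (rule exI[of _ r], intro conjI allI impI)
      show "r > 0" by (rule r)
      fix z w :: complex assume z: "norm z < r" and w: "norm w < r"
      have "(ps_W (Q n) z w has_sum ps_ev (Q n) z w) UNIV"
        by (rule ps_ev_has_sum[OF r(2)]) (use z w in auto)
      moreover have "skewQ p q n z w = ps_ev (Q n) z w"
        using F[of z w] z w by (simp add: skewQ_def)
      ultimately show "((\<lambda>(i, j). Q n i j * z ^ i * w ^ j) has_sum skewQ p q n z w) UNIV"
        by (simp add: ps_W_eq case_prod_unfold)
    qed
  qed
  have coeffQ: "coeff2 (skewQ p q n) = Q n" for n
    unfolding coeff2_def using skew[of n] ps2_unique by (intro the_equality) blast+
  have coeffq: "coeff2 q = b"
    unfolding coeff2_def using q_exp ps2_unique by (intro the_equality) blast+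
  have skew1: "skewQ p q 1 = q" by (simp add: fun_eq_iff skewQ_def)
  have Q1: "Q 1 = b" using ps2_unique[OF skew[of 1, unfolded skew1] q_exp] .
  have go: "germ_ord g = ordc (coeff2 g)" for g by (simp add: germ_ord_def ordc_def)
  have Pf: "ps_ordge (P k) (\<delta> ^ k) \<and> ps_zax (P k) (\<delta> ^ k) \<and> P k (\<delta> ^ k) 0 \<noteq> 0" for k
    using P_facts[OF delta_pos a_delta a_low] by (simp add: P_def)
  have Qz: "ps_zax (Q (Suc m)) (\<gamma> * \<delta> ^ m) \<and> Q (Suc m) (\<gamma> * \<delta> ^ m) 0 \<noteq> 0" for m
    using Q_axis[of a b \<delta> \<gamma>, OF _ _ zb bg g1 delta_pos V2] P_facts[OF delta_pos a_delta a_low] Q1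
    by (simp add: Q_def)
  have Qup: "ordc (Q (Suc m)) \<le> \<gamma> * \<delta> ^ m" for m using ordc_le[of "Q (Suc m)"] Qz[of m] by fastforce
  have Qrec: "Q (Suc m) = ps_comp b (P m) (Q m)" for m by (simp add: P_def Q_def)
  have lowstep: "\<exists>i j. b i j \<noteq> 0 \<and> i * \<delta> ^ Suc m + j * ordc (Q (Suc m)) \<le> i' + j'"
    if "Q (Suc (Suc m)) i' j' \<noteq> 0" for m i' j'
  proof -
    have "ps_comp b (P (Suc m)) (Q (Suc m)) i' j' \<noteq> 0" using that Qrec[of "Suc m"] by simp
    from ps_comp_nz[OF this conjunct1[OF Pf[of "Suc m"]] ordc_ordge] show ?thesis by auto
  qed
  have att: "\<exists>i' j'. i' + j' = ordc (Q (Suc m)) \<and> Q (Suc m) i' j' \<noteq> 0" for m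
    using ordc_att Qz[of m] by blast
  have main: "(l1 \<le> 1 \<longrightarrow> (\<forall>n\<ge>1. germ_ord (skewQ p q n) = \<gamma> * \<delta> ^ (n - 1)))
           \<and> (l1 > 1 \<longrightarrow>
                real \<gamma> / l1 \<le> real (germ_ord q) \<and> germ_ord q < \<gamma>
              \<and> (\<forall>n\<ge>2. real (\<gamma> * \<delta> ^ (n - 1)) / l1 < real (germ_ord (skewQ p q n))
                        \<and> germ_ord (skewQ p q n) \<le> \<gamma> * \<delta> ^ (n - 1)))"
  proof (intro conjI impI allI)
    assume l1le: "l1 \<le> 1"
    have C1: "ordc (Q (Suc m)) = \<gamma> * \<delta> ^ m" for m
    proof (induction m)
      case 0
      obtain i' j' where ij: "i' + j' = ordc (Q 1)" "Q 1 i' j' \<noteq> 0" using att[of 0] by auto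
      have "real i' + real j' \<ge> real i' + l1 * real j'" using mult_right_mono[OF l1le, of "real j'"] by simp
      then have "real (i' + j') \<ge> real \<gamma>" using V1'[of i' j'] ij Q1 by simp
      then have "ordc (Q 1) \<ge> \<gamma>" using ij by linarith
      then show ?case using Qup[of 0] by simp
    next
      case (Suc m)
      obtain i' j' where ij: "i' + j' = ordc (Q (Suc (Suc m)))" "Q (Suc (Suc m)) i' j' \<noteq> 0" using att[of "Suc m"] by auto
      obtain i j where b: "b i j \<noteq> 0" and le: "i * \<delta> ^ Suc m + j * ordc (Q (Suc m)) \<le> i' + j'"
        using lowstep[OF ij(2)] by blast
      have "(\<gamma> * \<delta>) * \<delta> ^ m \<le> (\<delta> * i + \<gamma> * j) * \<delta> ^ m" using V2'[OF b] by (rule mult_le_mono1)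
      then have "\<gamma> * \<delta> ^ Suc m \<le> i' + j'" using le Suc by (simp add: algebra_simps)
      then show ?case using Qup[of "Suc m"] ij by simp
    qed
    fix n :: nat assume n: "n \<ge> 1"
    then have "n = Suc (n - 1)" by simp
    then show "germ_ord (skewQ p q n) = \<gamma> * \<delta> ^ (n - 1)"
      using C1[of "n - 1"] by (simp add: go coeffQ)
  next
    assume l1gt: "l1 > 1"
    have base: "real \<gamma> / l1 \<le> real (ordc b)"
    proof -
      obtain i' j' where ij: "i' + j' = ordc b" "b i' j' \<noteq> 0" using ordc_att[of b, OF bg] by auto
      have "real i' * 1 \<le> real i' * l1" using l1gt by (intro mult_left_mono) auto
      then have "real i' * l1 \<ge> real i'" by simp
      then have "(real i' + real j') * l1 \<ge> real \<gamma>" using V1'[OF ij(2)] by (simp add: algebra_simps)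
      then have "real \<gamma> / l1 \<le> real i' + real j'" using l1gt by (simp add: field_simps)
      then show ?thesis using ij by simp
    qed
    then show "real \<gamma> / l1 \<le> real (germ_ord q)" by (simp add: go coeffq)
    have "ordc b \<le> nv (s - 1) + mv (s - 1)" using ordc_le[of b, OF bs1] .
    moreover have "real (nv (s - 1)) + real (mv (s - 1)) < real \<gamma>"
    proof -
      have "real (mv (s - 1)) < l1 * real (mv (s - 1))" using l1gt mgt by simp
      then show ?thesis using l1m by linarith
    qed
    ultimately show "germ_ord q < \<gamma>" by (simp add: go coeffq)
    have step: "real \<gamma> * real \<delta> ^ Suc m / l1 < real (ordc (Q (Suc (Suc m))))"
      if IH: "real \<gamma> * real \<delta> ^ m / l1 \<le> real (ordc (Q (Suc m)))" for m
    proof -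
      obtain i' j' where ij: "i' + j' = ordc (Q (Suc (Suc m)))" "Q (Suc (Suc m)) i' j' \<noteq> 0" using att[of "Suc m"] by auto
      obtain i j where b: "b i j \<noteq> 0" and le: "i * \<delta> ^ Suc m + j * ordc (Q (Suc m)) \<le> i' + j'"
        using lowstep[OF ij(2)] by blast
      define dm where "dm = real \<delta> ^ m"
      have dm: "dm > 0" using delta_pos by (simp add: dm_def)
      define c where "c = real (ordc (Q (Suc m)))"
      have V3: "l1 * real \<delta> * real i + real \<gamma> * real j > real \<gamma> * real \<delta>"
        by (rule V3_arith[OF l1gt _ _ _ _ lD V1'[OF b]]) (use delta_pos g1 in auto)
      have h1: "real (i' + j') \<ge> real i * (real \<delta> * dm) + real j * c"
        using le unfolding dm_def c_def by (metis of_nat_add of_nat_le_iff of_nat_mult of_nat_power power_Suc)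
      have h2: "real j * c \<ge> real j * (real \<gamma> * dm / l1)"
        using IH by (intro mult_left_mono) (auto simp: c_def dm_def)
      have h3: "real i * (real \<delta> * dm) + real j * (real \<gamma> * dm / l1) = (dm / l1) * (l1 * real \<delta> * real i + real \<gamma> * real j)"
        using l1gt by (simp add: field_simps)
      have h4: "(dm / l1) * (l1 * real \<delta> * real i + real \<gamma> * real j) > (dm / l1) * (real \<gamma> * real \<delta>)"
        using V3 dm l1gt by (intro mult_strict_left_mono) auto
      have h5: "(dm / l1) * (real \<gamma> * real \<delta>) = real \<gamma> * real \<delta> ^ Suc m / l1"
        by (simp add: dm_def)
      show ?thesis using h1 h2 h3 h4 h5 ij(1) by linarith
    qed
    have C2: "real \<gamma> * real \<delta> ^ m / l1 \<le> real (ordc (Q (Suc m)))" for m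
    proof (induction m)
      case 0 then show ?case using base Q1 by simp
    next
      case (Suc m) then show ?case using step[OF Suc] by simp
    qed
    fix n :: nat assume n: "n \<ge> 2"
    then obtain m where m: "n = Suc (Suc m)" by (metis add_2_eq_Suc le_Suc_ex)
    have "real \<gamma> * real \<delta> ^ Suc m / l1 < real (ordc (Q (Suc (Suc m))))" using step[OF C2[of m]] .
    then show "real (\<gamma> * \<delta> ^ (n - 1)) / l1 < real (germ_ord (skewQ p q n))"
      using m by (simp add: go coeffQ)
    show "germ_ord (skewQ p q n) \<le> \<gamma> * \<delta> ^ (n - 1)"
      using m Qup[of "Suc m"] by (simp add: go coeffQ)
  qed
  show ?thesis using main unfolding Let_def \<gamma>_def l1_def by simp
qed

end
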